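(* Assume $M$ is projective in $\sigma[M]$. Then $\mathrm{Nil}_*(M)=\mathrm{Nil}_*(M)\cdot M=M\text{-}\mathrm{Nil}_*(M)$.
   Context: $R$ is a ring with identity, modules are unital left $R$-modules, $M$ is a fixed left $R$-module; $\sigma[M]$ is the full subcategory of $R$-modules isomorphic to submodules of $M$-generated modules. For $N\le M$ and a module $X$, $N\cdot X$ is the intersection of the kernels of all homomorphisms $X\to W$ where $W$ ranges over modules with $f(N)=0$ for all $f\in\mathrm{Hom}_R(M,W)$. An element $x$ of a module $X$ is strongly nilpotent if $x=\sum_{i=1}^r a_ix_i$ with $a_i\in R$, $x_i\in X$, such that for each $i$ and every sequence $a_{i1},a_{i2},\dots$ with $a_{i1}=a_i$ and $a_{i,n+1}\in a_{in}Ra_{in}$ for all $n$, there is $k$ with $a_{ik}Rx_i=0$; $\mathrm{Nil}_*(X)$ is the set of strongly nilpotent elements of $X$ (a submodule of $X$). For $X\in\sigma[M]$, $x\in X$ is strongly $M$-nilpotent if $x=\sum_{i=1}^n r_if_i(m_i)$ with $r_i\in R$, $m_i\in M$, $x_i\in X$, $f_i\in\mathrm{Hom}_R(M,Rx_i)$, such that for each $i$ and every sequence $r_{i1},r_{i2},\dots$ with $r_{i1}=r_i$ and $r_{i,t+1}\in r_{it}Rr_{it}$ for all $t$, there is $k$ with $r_{ik}Rf_i(m_i)=0$; $M\text{-}\mathrm{Nil}_*(X)$ is the set of strongly $M$-nilpotent elements of $X$. *)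

theory Defs
  imports Main
begin

record ('r, 'a) lmod =
  mcarrier :: "'a set"
  madd :: "'a \<Rightarrow> 'a \<Rightarrow> 'a"
  mzero :: "'a"
  msmult :: "'r \<Rightarrow> 'a \<Rightarrow> 'a"

definition lmodule :: "('r::ring_1, 'a) lmod \<Rightarrow> bool" where
  "lmodule X \<longleftrightarrow>
     mzero X \<in> mcarrier X \<and>
     (\<forall>x\<in>mcarrier X. \<forall>y\<in>mcarrier X. madd X x y \<in> mcarrier X) \<and>
     (\<forall>r. \<forall>x\<in>mcarrier X. msmult X r x \<in> mcarrier X) \<and>
     (\<forall>x\<in>mcarrier X. \<forall>y\<in>mcarrier X. \<forall>z\<in>mcarrier X.
        madd X (madd X x y) z = madd X x (madd X y z)) \<and>
     (\<forall>x\<in>mcarrier X. \<forall>y\<in>mcarrier X. madd X x y = madd X y x) \<and>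
     (\<forall>x\<in>mcarrier X. madd X (mzero X) x = x) \<and>
     (\<forall>x\<in>mcarrier X. \<exists>y\<in>mcarrier X. madd X x y = mzero X) \<and>
     (\<forall>r. \<forall>x\<in>mcarrier X. \<forall>y\<in>mcarrier X.
        msmult X r (madd X x y) = madd X (msmult X r x) (msmult X r y)) \<and>
     (\<forall>r s. \<forall>x\<in>mcarrier X. msmult X (r + s) x = madd X (msmult X r x) (msmult X s x)) \<and>
     (\<forall>r s. \<forall>x\<in>mcarrier X. msmult X (r * s) x = msmult X r (msmult X s x)) \<and>
     (\<forall>x\<in>mcarrier X. msmult X 1 x = x)"

definition mhom :: "('r::ring_1, 'a) lmod \<Rightarrow> ('r, 'b) lmod \<Rightarrow> ('a \<Rightarrow> 'b) \<Rightarrow> bool" where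
  "mhom X Y f \<longleftrightarrow>
     (\<forall>x\<in>mcarrier X. f x \<in> mcarrier Y) \<and>
     (\<forall>x\<in>mcarrier X. \<forall>y\<in>mcarrier X. f (madd X x y) = madd Y (f x) (f y)) \<and>
     (\<forall>r. \<forall>x\<in>mcarrier X. f (msmult X r x) = msmult Y r (f x))"

primrec msum :: "('r, 'a) lmod \<Rightarrow> (nat \<Rightarrow> 'a) \<Rightarrow> nat \<Rightarrow> 'a" where
  "msum X f 0 = mzero X"
| "msum X f (Suc n) = madd X (msum X f n) (f n)"

definition cyclic_sub :: "('r::ring_1, 'a) lmod \<Rightarrow> 'a \<Rightarrow> ('r, 'a) lmod" where
  "cyclic_sub X x = X\<lparr>mcarrier := range (\<lambda>r. msmult X r x)\<rparr>"

text \<open>G is M-generated: G is the sum of the images of all homomorphisms M \<rightarrow> G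
  (equivalently, an epimorphic image of a direct sum of copies of M).\<close>
definition mgenerated :: "('r::ring_1, 'm) lmod \<Rightarrow> ('r, 'a) lmod \<Rightarrow> bool" where
  "mgenerated M G \<longleftrightarrow>
     (\<forall>g\<in>mcarrier G. \<exists>n fs ms. (\<forall>i<n. mhom M G (fs i) \<and> ms i \<in> mcarrier M) \<and>
        g = msum G (\<lambda>i. fs i (ms i)) n)"

text \<open>X belongs to sigma[M]: X is isomorphic to a submodule of an M-generated module
  (the M-generated module being taken with elements of the same type as X).\<close>
definition in_sigma :: "('r::ring_1, 'm) lmod \<Rightarrow> ('r, 'a) lmod \<Rightarrow> bool" where
  "in_sigma M X \<longleftrightarrow> lmodule X \<and>
     (\<exists>G :: ('r, 'a) lmod. lmodule G \<and> mgenerated M G \<and>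
        (\<exists>f. mhom X G f \<and> inj_on f (mcarrier X)))"

text \<open>M is projective in sigma[M], relative to all modules of sigma[M] whose elements
  live in the universe type 'u.\<close>
definition proj_sigma :: "('r::ring_1, 'm) lmod \<Rightarrow> 'u itself \<Rightarrow> bool" where
  "proj_sigma M (U :: 'u itself) \<longleftrightarrow>
     in_sigma M M \<and>
     (\<forall>(A :: ('r, 'u) lmod) (B :: ('r, 'u) lmod) g f.
        in_sigma M A \<and> in_sigma M B \<and> mhom A B g \<and> g ` mcarrier A = mcarrier B \<and>
        mhom M B f \<longrightarrow>
        (\<exists>h. mhom M A h \<and> (\<forall>m\<in>mcarrier M. g (h m) = f m)))"

text \<open>W ranges over modules with elements of
  type 'a set, which contains (a copy of) every quotient of X, so nothing is lost.\<close>
definition mprod :: "('r::ring_1, 'm) lmod \<Rightarrow> 'm set \<Rightarrow> ('r, 'a) lmod \<Rightarrow> 'a set" where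
  "mprod M N X = {x \<in> mcarrier X.
     \<forall>(W :: ('r, 'a set) lmod) \<phi>.
       lmodule W \<and> (\<forall>f. mhom M W f \<longrightarrow> (\<forall>n\<in>N. f n = mzero W)) \<and> mhom X W \<phi>
       \<longrightarrow> \<phi> x = mzero W}"

definition snil_pair :: "('r::ring_1, 'a) lmod \<Rightarrow> 'r \<Rightarrow> 'a \<Rightarrow> bool" where
  "snil_pair X a y \<longleftrightarrow>
     (\<forall>s :: nat \<Rightarrow> 'r. s 0 = a \<and> (\<forall>n. \<exists>r. s (Suc n) = s n * r * s n) \<longrightarrow>
        (\<exists>k. \<forall>r. msmult X (s k * r) y = mzero X))"

definition Nil_star :: "('r::ring_1, 'a) lmod \<Rightarrow> 'a set" where
  "Nil_star X = {x \<in> mcarrier X. \<exists>n a xs.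
     (\<forall>i<n. xs i \<in> mcarrier X \<and> snil_pair X (a i) (xs i)) \<and>
     x = msum X (\<lambda>i. msmult X (a i) (xs i)) n}"

definition MNil_star :: "('r::ring_1, 'm) lmod \<Rightarrow> ('r, 'a) lmod \<Rightarrow> 'a set" where
  "MNil_star M X = {x \<in> mcarrier X. \<exists>n r ms xs fs.
     (\<forall>i<n. ms i \<in> mcarrier M \<and> xs i \<in> mcarrier X \<and>
        mhom M (cyclic_sub X (xs i)) (fs i) \<and> snil_pair X (r i) (fs i (ms i))) \<and>
     x = msum X (\<lambda>i. msmult X (r i) (fs i (ms i))) n}"

end

theory Submission
  imports Defs "HOL-Algebra.FiniteProduct"
begin


lemma lm_zero: "lmodule X \<Longrightarrow> mzero X \<in> mcarrier X" unfolding lmodule_def by (elim conjE) blast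
lemma lm_add: "lmodule X \<Longrightarrow> x \<in> mcarrier X \<Longrightarrow> y \<in> mcarrier X \<Longrightarrow> madd X x y \<in> mcarrier X" unfolding lmodule_def by (elim conjE) blast
lemma lm_smult: "lmodule X \<Longrightarrow> x \<in> mcarrier X \<Longrightarrow> msmult X r x \<in> mcarrier X" unfolding lmodule_def by (elim conjE) blast
lemma lm_assoc: "lmodule X \<Longrightarrow> x \<in> mcarrier X \<Longrightarrow> y \<in> mcarrier X \<Longrightarrow> z \<in> mcarrier X \<Longrightarrow> madd X (madd X x y) z = madd X x (madd X y z)" unfolding lmodule_def by (elim conjE) blast
lemma lm_comm: "lmodule X \<Longrightarrow> x \<in> mcarrier X \<Longrightarrow> y \<in> mcarrier X \<Longrightarrow> madd X x y = madd X y x" unfolding lmodule_def by (elim conjE) blast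
lemma lm_lzero: "lmodule X \<Longrightarrow> x \<in> mcarrier X \<Longrightarrow> madd X (mzero X) x = x" unfolding lmodule_def by (elim conjE) blast
lemma lm_inv: "lmodule X \<Longrightarrow> x \<in> mcarrier X \<Longrightarrow> \<exists>y\<in>mcarrier X. madd X x y = mzero X" unfolding lmodule_def by (elim conjE) blast
lemma lm_dist1: "lmodule X \<Longrightarrow> x \<in> mcarrier X \<Longrightarrow> y \<in> mcarrier X \<Longrightarrow> msmult X r (madd X x y) = madd X (msmult X r x) (msmult X r y)" unfolding lmodule_def by (elim conjE) blast
lemma lm_dist2: "lmodule X \<Longrightarrow> x \<in> mcarrier X \<Longrightarrow> msmult X (r + s) x = madd X (msmult X r x) (msmult X s x)" unfolding lmodule_def by (elim conjE) blast
lemma lm_smult_assoc: "lmodule X \<Longrightarrow> x \<in> mcarrier X \<Longrightarrow> msmult X (r * s) x = msmult X r (msmult X s x)" unfolding lmodule_def by (elim conjE) blast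
lemma lm_one: "lmodule X \<Longrightarrow> x \<in> mcarrier X \<Longrightarrow> msmult X 1 x = x" by (simp add: lmodule_def)

lemma lm_rzero: "lmodule X \<Longrightarrow> x \<in> mcarrier X \<Longrightarrow> madd X x (mzero X) = x"
  by (metis lm_comm lm_lzero lm_zero)

lemma lm_cancel:
  assumes X: "lmodule X" and c: "a \<in> mcarrier X" "b \<in> mcarrier X" "c \<in> mcarrier X"
    and e: "madd X a b = madd X a c"
  shows "b = c"
proof -
  obtain y where y: "y \<in> mcarrier X" "madd X a y = mzero X" using lm_inv[OF X c(1)] by blast
  have "madd X y (madd X a b) = madd X y (madd X a c)" using e by simp
  hence "madd X (madd X y a) b = madd X (madd X y a) c" using lm_assoc[OF X] c y by simp
  moreover have "madd X y a = mzero X" using y lm_comm[OF X] c by metis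
  ultimately show ?thesis using lm_lzero[OF X] c by simp
qed

lemma lm_zero_smult: assumes X: "lmodule X" and x: "x \<in> mcarrier X" shows "msmult X 0 x = mzero X"
proof -
  have "madd X (msmult X 0 x) (msmult X 0 x) = madd X (msmult X 0 x) (mzero X)"
    using lm_dist2[OF X x, of 0 0] lm_rzero[OF X] lm_smult[OF X x] by simp
  thus ?thesis using lm_cancel[OF X] lm_smult[OF X x] lm_zero[OF X] by blast
qed

lemma lm_smult_zero: assumes X: "lmodule X" shows "msmult X r (mzero X) = mzero X"
proof -
  have z: "mzero X \<in> mcarrier X" using lm_zero[OF X] .
  have "madd X (msmult X r (mzero X)) (msmult X r (mzero X)) = madd X (msmult X r (mzero X)) (mzero X)"
    using lm_dist1[OF X z z, of r] lm_rzero[OF X] lm_smult[OF X z] lm_lzero[OF X z] by simp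
  thus ?thesis using lm_cancel[OF X] lm_smult[OF X z] z by blast
qed

lemma lm_neg: assumes X: "lmodule X" and x: "x \<in> mcarrier X" shows "madd X x (msmult X (-1) x) = mzero X"
proof -
  have "madd X x (msmult X (-1) x) = madd X (msmult X 1 x) (msmult X (-1) x)" using lm_one[OF X x] by simp
  also have "\<dots> = msmult X (1 + -1) x" using lm_dist2[OF X x] by metis
  also have "\<dots> = mzero X" using lm_zero_smult[OF X x] by simp
  finally show ?thesis .
qed

lemma lm_neg_unique: assumes X: "lmodule X" and x: "x \<in> mcarrier X" "y \<in> mcarrier X"
  and e: "madd X x y = mzero X" shows "y = msmult X (-1) x"
  using lm_cancel[OF X x(1) x(2) lm_smult[OF X x(1)]] e lm_neg[OF X x(1)] by simp

lemma msum_closed: "lmodule X \<Longrightarrow> (\<And>i. i < n \<Longrightarrow> f i \<in> mcarrier X) \<Longrightarrow> msum X f n \<in> mcarrier X"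
  by (induction n) (auto intro: lm_zero lm_add)

lemma msum_cong: "(\<And>i. i < n \<Longrightarrow> f i = g i) \<Longrightarrow> msum X f n = msum X g n"
  by (induction n) auto

lemma msum_append:
  assumes X: "lmodule X" and f: "\<And>i. i < n \<Longrightarrow> f i \<in> mcarrier X" and g: "\<And>i. i < k \<Longrightarrow> g i \<in> mcarrier X"
  shows "msum X (\<lambda>i. if i < n then f i else g (i - n)) (n + k) = madd X (msum X f n) (msum X g k)"
  using g
proof (induction k)
  case 0
  have "msum X (\<lambda>i. if i < n then f i else g (i - n)) n = msum X f n" by (rule msum_cong) auto
  then show ?case using lm_rzero[OF X msum_closed[OF X f]] by simp
next
  case (Suc k)
  have "msum X (\<lambda>i. if i < n then f i else g (i - n)) (n + Suc k)
     = madd X (madd X (msum X f n) (msum X g k)) (g k)" using Suc by simp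
  also have "\<dots> = madd X (msum X f n) (msum X g (Suc k))"
    using lm_assoc[OF X] msum_closed[OF X f] msum_closed[OF X, of k g] Suc.prems by simp
  finally show ?case .
qed

lemma msum_smult: assumes X: "lmodule X" and f: "\<And>i. i < n \<Longrightarrow> f i \<in> mcarrier X"
  shows "msmult X r (msum X f n) = msum X (\<lambda>i. msmult X r (f i)) n"
  using f by (induction n) (auto simp: lm_smult_zero[OF X] lm_dist1[OF X] msum_closed[OF X])

lemma mhom_zero: assumes X: "lmodule X" and Y: "lmodule Y" and h: "mhom X Y f" shows "f (mzero X) = mzero Y"
proof -
  have "f (mzero X) = f (msmult X 0 (mzero X))" using lm_zero_smult[OF X lm_zero[OF X]] by simp
  also have "\<dots> = msmult Y 0 (f (mzero X))" using h lm_zero[OF X] unfolding mhom_def by blast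
  also have "\<dots> = mzero Y" using lm_zero_smult[OF Y] h lm_zero[OF X] unfolding mhom_def by blast
  finally show ?thesis .
qed

lemma mhom_msum: assumes X: "lmodule X" and Y: "lmodule Y" and h: "mhom X Y f"
  and g: "\<And>i. i < n \<Longrightarrow> g i \<in> mcarrier X"
  shows "f (msum X g n) = msum Y (\<lambda>i. f (g i)) n"
  using g by (induction n) (auto simp: mhom_zero[OF X Y h] msum_closed[OF X] h[unfolded mhom_def])


lemma snil_mult:
  assumes X: "lmodule X" and y: "y \<in> mcarrier X" and sn: "snil_pair X a y"
  shows "snil_pair X (r * a) y"
  unfolding snil_pair_def
proof (intro allI impI)
  fix s :: "nat \<Rightarrow> 'a" assume H: "s 0 = r * a \<and> (\<forall>n. \<exists>t. s (Suc n) = s n * t * s n)"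
  define t where "t n = (SOME t. s (Suc n) = s n * t * s n)" for n
  have t: "s (Suc n) = s n * t n * s n" for n unfolding t_def using H by (metis (mono_tags) someI_ex)
  define u where "u = rec_nat a (\<lambda>n un. un * (t n * r) * un)"
  have u0: "u 0 = a" and uS: "u (Suc n) = u n * (t n * r) * u n" for n by (simp_all add: u_def)
  have su: "s n = r * u n" for n
  proof (induction n)
    case 0 then show ?case using H u0 by simp
  next
    case (Suc n) then show ?case using t uS by (simp add: mult.assoc)
  qed
  have "u 0 = a \<and> (\<forall>n. \<exists>q. u (Suc n) = u n * q * u n)" using u0 uS by blast
  then obtain k where k: "\<forall>q. msmult X (u k * q) y = mzero X" using sn unfolding snil_pair_def by blast
  show "\<exists>k. \<forall>q. msmult X (s k * q) y = mzero X"
  proof (intro exI allI)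
    fix q
    have "msmult X (s k * q) y = msmult X r (msmult X (u k * q) y)"
      using su lm_smult_assoc[OF X y] by (simp add: mult.assoc)
    also have "\<dots> = mzero X" using k lm_smult_zero[OF X] by simp
    finally show "msmult X (s k * q) y = mzero X" .
  qed
qed

lemma snil_hom:
  assumes X: "lmodule X" and Y: "lmodule Y" and h: "mhom X Y f" and y: "y \<in> mcarrier X"
    and sn: "snil_pair X a y"
  shows "snil_pair Y a (f y)"
  unfolding snil_pair_def
proof (intro allI impI)
  fix s :: "nat \<Rightarrow> 'a" assume H: "s 0 = a \<and> (\<forall>n. \<exists>t. s (Suc n) = s n * t * s n)"
  then obtain k where k: "\<forall>q. msmult X (s k * q) y = mzero X" using sn unfolding snil_pair_def by blast
  show "\<exists>k. \<forall>q. msmult Y (s k * q) (f y) = mzero Y"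
  proof (intro exI allI)
    fix q
    have "msmult Y (s k * q) (f y) = f (msmult X (s k * q) y)" using h y unfolding mhom_def by metis
    then show "msmult Y (s k * q) (f y) = mzero Y" using k mhom_zero[OF X Y h] by simp
  qed
qed


definition submod :: "('r::ring_1, 'a) lmod \<Rightarrow> 'a set \<Rightarrow> bool" where
  "submod X K \<longleftrightarrow> K \<subseteq> mcarrier X \<and> mzero X \<in> K \<and> (\<forall>a\<in>K. \<forall>b\<in>K. madd X a b \<in> K)
     \<and> (\<forall>r. \<forall>a\<in>K. msmult X r a \<in> K)"

lemma Nil_star_sub: "Nil_star X \<subseteq> mcarrier X" unfolding Nil_star_def by blast

lemma Nil_starI: "x \<in> mcarrier X \<Longrightarrow> \<forall>i<n. xs i \<in> mcarrier X \<and> snil_pair X (a i) (xs i) \<Longrightarrow>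
  x = msum X (\<lambda>i. msmult X (a i) (xs i)) n \<Longrightarrow> x \<in> Nil_star X"
  unfolding Nil_star_def by blast

lemma Nil_star_submod: assumes X: "lmodule X" shows "submod X (Nil_star X)"
  unfolding submod_def
proof (intro conjI ballI allI)
  show "Nil_star X \<subseteq> mcarrier X" by (rule Nil_star_sub)
  show "mzero X \<in> Nil_star X" unfolding Nil_star_def using lm_zero[OF X]
    by (auto intro!: exI[of _ 0])
next
  fix x y assume x: "x \<in> Nil_star X" and y: "y \<in> Nil_star X"
  obtain n a xs where A: "\<forall>i<n. xs i \<in> mcarrier X \<and> snil_pair X (a i) (xs i)"
      "x = msum X (\<lambda>i. msmult X (a i) (xs i)) n" using x unfolding Nil_star_def by blast
  obtain k b ys where B: "\<forall>i<k. ys i \<in> mcarrier X \<and> snil_pair X (b i) (ys i)"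
      "y = msum X (\<lambda>i. msmult X (b i) (ys i)) k" using y unfolding Nil_star_def by blast
  define c where "c i = (if i < n then a i else b (i - n))" for i
  define zs where "zs i = (if i < n then xs i else ys (i - n))" for i
  have f1: "\<And>i. i < n \<Longrightarrow> msmult X (a i) (xs i) \<in> mcarrier X" using A(1) lm_smult[OF X] by blast
  have f2: "\<And>i. i < k \<Longrightarrow> msmult X (b i) (ys i) \<in> mcarrier X" using B(1) lm_smult[OF X] by blast
  have "madd X x y = msum X (\<lambda>i. if i < n then msmult X (a i) (xs i) else msmult X (b (i-n)) (ys (i-n))) (n + k)"
    unfolding A(2) B(2) by (rule msum_append[OF X, symmetric]) (use f1 f2 in auto)
  also have "\<dots> = msum X (\<lambda>i. msmult X (c i) (zs i)) (n + k)"
    by (rule msum_cong) (simp add: c_def zs_def)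
  finally have e: "madd X x y = msum X (\<lambda>i. msmult X (c i) (zs i)) (n + k)" .
  have "\<forall>i<n+k. zs i \<in> mcarrier X \<and> snil_pair X (c i) (zs i)"
  proof (intro allI impI)
    fix i assume i: "i < n + k"
    show "zs i \<in> mcarrier X \<and> snil_pair X (c i) (zs i)"
    proof (cases "i < n")
      case True then show ?thesis using A(1) by (simp add: c_def zs_def)
    next
      case False then have "i - n < k" using i by simp
      then show ?thesis using B(1) False by (simp add: c_def zs_def)
    qed
  qed
  moreover have "madd X x y \<in> mcarrier X" using x y Nil_star_sub[of X] by (intro lm_add[OF X]) auto
  ultimately show "madd X x y \<in> Nil_star X" using e by (intro Nil_starI)
next
  fix r x assume x: "x \<in> Nil_star X"
  obtain n a xs where A: "\<forall>i<n. xs i \<in> mcarrier X \<and> snil_pair X (a i) (xs i)"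
      "x = msum X (\<lambda>i. msmult X (a i) (xs i)) n" using x unfolding Nil_star_def by blast
  have "msmult X r x = msum X (\<lambda>i. msmult X r (msmult X (a i) (xs i))) n"
    unfolding A(2) by (rule msum_smult[OF X]) (use A(1) lm_smult[OF X] in blast)
  also have "\<dots> = msum X (\<lambda>i. msmult X (r * a i) (xs i)) n"
    by (rule msum_cong) (simp add: A(1) lm_smult_assoc[OF X])
  finally have "\<forall>i<n. xs i \<in> mcarrier X \<and> snil_pair X (r * a i) (xs i)"
    "msmult X r x = msum X (\<lambda>i. msmult X (r * a i) (xs i)) n"
    using A snil_mult[OF X] by auto
  moreover have "msmult X r x \<in> mcarrier X" using x Nil_star_sub[of X] by (intro lm_smult[OF X]) auto
  ultimately show "msmult X r x \<in> Nil_star X" by (intro Nil_starI)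
qed

lemma Nil_star_hom:
  assumes X: "lmodule X" and h: "mhom X X f" and x: "x \<in> Nil_star X"
  shows "f x \<in> Nil_star X"
proof -
  obtain n a xs where A: "\<forall>i<n. xs i \<in> mcarrier X \<and> snil_pair X (a i) (xs i)"
      "x = msum X (\<lambda>i. msmult X (a i) (xs i)) n" using x unfolding Nil_star_def by blast
  have "f x = msum X (\<lambda>i. f (msmult X (a i) (xs i))) n"
    unfolding A(2) by (rule mhom_msum[OF X X h]) (use A(1) lm_smult[OF X] in blast)
  also have "\<dots> = msum X (\<lambda>i. msmult X (a i) (f (xs i))) n"
    by (rule msum_cong) (use A h in \<open>simp add: mhom_def\<close>)
  finally have "f x = msum X (\<lambda>i. msmult X (a i) (f (xs i))) n" .
  moreover have "\<forall>i<n. f (xs i) \<in> mcarrier X \<and> snil_pair X (a i) (f (xs i))"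
    using A h snil_hom[OF X X h] unfolding mhom_def by blast
  moreover have "f x \<in> mcarrier X" using x Nil_star_sub[of X] h unfolding mhom_def by blast
  ultimately show ?thesis by (intro Nil_starI)
qed


lemma lm_swap: assumes X: "lmodule X" and c: "a \<in> mcarrier X" "b \<in> mcarrier X" "c \<in> mcarrier X" "d \<in> mcarrier X"
  shows "madd X (madd X a b) (madd X c d) = madd X (madd X a c) (madd X b d)"
proof -
  have "madd X (madd X a b) (madd X c d) = madd X a (madd X b (madd X c d))"
    using c by (simp add: lm_assoc[OF X] lm_add[OF X])
  also have "madd X b (madd X c d) = madd X c (madd X b d)"
    using c by (metis lm_assoc[OF X] lm_comm[OF X])
  also have "madd X a (madd X c (madd X b d)) = madd X (madd X a c) (madd X b d)"
    using c by (simp add: lm_assoc[OF X] lm_add[OF X])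
  finally show ?thesis .
qed

definition coset :: "('r::ring_1, 'a) lmod \<Rightarrow> 'a set \<Rightarrow> 'a \<Rightarrow> 'a set" where
  "coset X K a = {z \<in> mcarrier X. \<exists>k\<in>K. z = madd X a k}"

definition quot :: "('r::ring_1, 'a) lmod \<Rightarrow> 'a set \<Rightarrow> ('r, 'a set) lmod" where
  "quot X K = \<lparr>mcarrier = coset X K ` mcarrier X,
     madd = (\<lambda>C D. coset X K (madd X (SOME c. c \<in> C) (SOME d. d \<in> D))),
     mzero = K,
     msmult = (\<lambda>r C. coset X K (msmult X r (SOME c. c \<in> C)))\<rparr>"

context
  fixes X :: "('r::ring_1, 'a) lmod" and K
  assumes X: "lmodule X" and K: "submod X K"
begin

lemma K_sub: "K \<subseteq> mcarrier X" and K0: "mzero X \<in> K" and K_add: "a \<in> K \<Longrightarrow> b \<in> K \<Longrightarrow> madd X a b \<in> K"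
  and K_smult: "a \<in> K \<Longrightarrow> msmult X r a \<in> K"
  using K unfolding submod_def by blast+

lemma coset_mem: assumes a: "a \<in> mcarrier X" shows "a \<in> coset X K a"
  unfolding coset_def using K0 lm_rzero[OF X a, symmetric] a by blast

lemma coset_shift:
  assumes a: "a \<in> mcarrier X" and k: "k \<in> K"
  shows "coset X K (madd X a k) = coset X K a"
proof -
  have kc: "k \<in> mcarrier X" using k K_sub by blast
  have "z \<in> coset X K a" if "z \<in> coset X K (madd X a k)" for z
  proof -
    from that have "z \<in> mcarrier X \<and> (\<exists>k'\<in>K. z = madd X (madd X a k) k')" by (simp add: coset_def)
    then obtain k' where "k' \<in> K" "z = madd X (madd X a k) k'" "z \<in> mcarrier X" by blast
    moreover have "madd X (madd X a k) k' = madd X a (madd X k k')"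
      using lm_assoc[OF X a kc] calculation(1) K_sub by blast
    ultimately show ?thesis unfolding coset_def using K_add k by blast
  qed
  moreover have "z \<in> coset X K (madd X a k)" if "z \<in> coset X K a" for z
  proof -
    from that have "z \<in> mcarrier X \<and> (\<exists>k'\<in>K. z = madd X a k')" by (simp add: coset_def)
    then obtain k' where k': "k' \<in> K" "z = madd X a k'" "z \<in> mcarrier X" by blast
    have k'c: "k' \<in> mcarrier X" using k' K_sub by blast
    let ?m = "msmult X (-1) k"
    have mc: "?m \<in> mcarrier X" using lm_smult[OF X kc] .
    have "madd X (madd X a k) (madd X ?m k') = madd X a (madd X (madd X k ?m) k')"
      using a kc mc k'c by (simp add: lm_assoc[OF X] lm_add[OF X])
    also have "\<dots> = z" using lm_neg[OF X kc] lm_lzero[OF X k'c] k' by simp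
    finally show ?thesis unfolding coset_def using K_add K_smult k k' by blast
  qed
  ultimately show ?thesis by blast
qed

lemma coset_rep:
  assumes a: "a \<in> mcarrier X"
  shows "\<exists>k\<in>K. (SOME c. c \<in> coset X K a) = madd X a k"
proof -
  have "(SOME c. c \<in> coset X K a) \<in> coset X K a" using coset_mem[OF a] by (rule someI)
  then show ?thesis unfolding coset_def by blast
qed

lemma coset_rep_eq:
  assumes a: "a \<in> mcarrier X"
  shows "coset X K (SOME c. c \<in> coset X K a) = coset X K a"
  using coset_rep[OF a] coset_shift[OF a] by metis

lemma coset_zero: "coset X K (mzero X) = K"
proof -
  have "x \<in> coset X K (mzero X)" if "x \<in> K" for x
    unfolding coset_def using that K_sub lm_lzero[OF X, of x, symmetric] by blast
  moreover have "x \<in> K" if "x \<in> coset X K (mzero X)" for x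
  proof -
    from that have "x \<in> mcarrier X \<and> (\<exists>k\<in>K. x = madd X (mzero X) k)" by (simp add: coset_def)
    then show ?thesis using K_sub lm_lzero[OF X] by auto
  qed
  ultimately show ?thesis by blast
qed

lemma coset_eq_K: "a \<in> mcarrier X \<Longrightarrow> coset X K a = K \<Longrightarrow> a \<in> K"
  using coset_mem by blast

lemma coset_sub: "coset X K a \<subseteq> mcarrier X" unfolding coset_def by blast

lemma quot_add:
  assumes a: "a \<in> mcarrier X" and b: "b \<in> mcarrier X"
  shows "madd (quot X K) (coset X K a) (coset X K b) = coset X K (madd X a b)"
proof -
  obtain k1 where k1: "k1 \<in> K" "(SOME c. c \<in> coset X K a) = madd X a k1" using coset_rep[OF a] by blast
  obtain k2 where k2: "k2 \<in> K" "(SOME c. c \<in> coset X K b) = madd X b k2" using coset_rep[OF b] by blast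
  have kc: "k1 \<in> mcarrier X" "k2 \<in> mcarrier X" using k1 k2 K_sub by auto
  have "madd (quot X K) (coset X K a) (coset X K b) = coset X K (madd X (madd X a k1) (madd X b k2))"
    unfolding quot_def using k1 k2 by simp
  also have "madd X (madd X a k1) (madd X b k2) = madd X (madd X a b) (madd X k1 k2)"
    using lm_swap[OF X a kc(1) b kc(2)] .
  also have "coset X K \<dots> = coset X K (madd X a b)"
    using coset_shift lm_add[OF X a b] K_add k1 k2 by blast
  finally show ?thesis .
qed

lemma quot_smult:
  assumes a: "a \<in> mcarrier X"
  shows "msmult (quot X K) r (coset X K a) = coset X K (msmult X r a)"
proof -
  obtain k1 where k1: "k1 \<in> K" "(SOME c. c \<in> coset X K a) = madd X a k1" using coset_rep[OF a] by blast
  have kc: "k1 \<in> mcarrier X" using k1 K_sub by auto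
  have "msmult (quot X K) r (coset X K a) = coset X K (msmult X r (madd X a k1))"
    unfolding quot_def using k1 by simp
  also have "msmult X r (madd X a k1) = madd X (msmult X r a) (msmult X r k1)"
    using lm_dist1[OF X a kc] .
  also have "coset X K \<dots> = coset X K (msmult X r a)"
    using coset_shift lm_smult[OF X a] K_smult k1 by blast
  finally show ?thesis .
qed

lemma quot_zero: "mzero (quot X K) = coset X K (mzero X)"
  unfolding quot_def using coset_zero by simp

lemma quot_carrier: "mcarrier (quot X K) = coset X K ` mcarrier X" unfolding quot_def by simp

lemma lmodule_quot: "lmodule (quot X K)"
proof -
  let ?Q = "quot X K" let ?C = "coset X K ` mcarrier X"
  have h1: "mzero ?Q \<in> ?C" using quot_zero lm_zero[OF X] by simp
  have h2: "\<forall>x\<in>?C. \<forall>y\<in>?C. madd ?Q x y \<in> ?C" using quot_add lm_add[OF X] by auto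
  have h3: "\<forall>r. \<forall>x\<in>?C. msmult ?Q r x \<in> ?C" using quot_smult lm_smult[OF X] by auto
  have h4: "\<forall>x\<in>?C. \<forall>y\<in>?C. \<forall>z\<in>?C. madd ?Q (madd ?Q x y) z = madd ?Q x (madd ?Q y z)"
    using quot_add lm_add[OF X] lm_assoc[OF X] by auto
  have h5: "\<forall>x\<in>?C. \<forall>y\<in>?C. madd ?Q x y = madd ?Q y x" using quot_add lm_comm[OF X] by auto
  have h6: "\<forall>x\<in>?C. madd ?Q (mzero ?Q) x = x" using quot_add quot_zero lm_zero[OF X] lm_lzero[OF X] by auto
  have h7: "\<forall>x\<in>?C. \<exists>y\<in>?C. madd ?Q x y = mzero ?Q"
  proof
    fix x assume x: "x \<in> ?C"
    then obtain a where a: "a \<in> mcarrier X" "x = coset X K a" by blast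
    have "madd ?Q x (coset X K (msmult X (-1) a)) = mzero ?Q"
      using quot_add[OF a(1) lm_smult[OF X a(1)]] lm_neg[OF X a(1)] quot_zero a by simp
    then show "\<exists>y\<in>?C. madd ?Q x y = mzero ?Q" using lm_smult[OF X a(1)] by blast
  qed
  have h8: "\<forall>r. \<forall>x\<in>?C. \<forall>y\<in>?C. msmult ?Q r (madd ?Q x y) = madd ?Q (msmult ?Q r x) (msmult ?Q r y)"
    using quot_add quot_smult lm_add[OF X] lm_smult[OF X] lm_dist1[OF X] by auto
  have h9: "\<forall>r s. \<forall>x\<in>?C. msmult ?Q (r + s) x = madd ?Q (msmult ?Q r x) (msmult ?Q s x)"
    using quot_add quot_smult lm_smult[OF X] lm_dist2[OF X] by auto
  have h10: "\<forall>r s. \<forall>x\<in>?C. msmult ?Q (r * s) x = msmult ?Q r (msmult ?Q s x)"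
    using quot_smult lm_smult[OF X] lm_smult_assoc[OF X] by auto
  have h11: "\<forall>x\<in>?C. msmult ?Q 1 x = x" using quot_smult lm_one[OF X] by auto
  show ?thesis unfolding lmodule_def quot_carrier using h1 h2 h3 h4 h5 h6 h7 h8 h9 h10 h11 by blast
qed

lemma mhom_quot: "mhom X (quot X K) (coset X K)"
  unfolding mhom_def using quot_add quot_smult quot_carrier by auto

end


lemma lmodule_image:
  assumes X: "lmodule X" and C: "mcarrier Y = \<phi> ` mcarrier X" and Z: "mzero Y = \<phi> (mzero X)"
    and A: "\<And>a b. a \<in> mcarrier X \<Longrightarrow> b \<in> mcarrier X \<Longrightarrow> madd Y (\<phi> a) (\<phi> b) = \<phi> (madd X a b)"
    and S: "\<And>r a. a \<in> mcarrier X \<Longrightarrow> msmult Y r (\<phi> a) = \<phi> (msmult X r a)"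
  shows "lmodule Y \<and> mhom X Y \<phi>"
proof -
  let ?C = "\<phi> ` mcarrier X"
  have h1: "mzero Y \<in> ?C" using Z lm_zero[OF X] by simp
  have h2: "\<forall>x\<in>?C. \<forall>y\<in>?C. madd Y x y \<in> ?C" using A lm_add[OF X] by auto
  have h3: "\<forall>r. \<forall>x\<in>?C. msmult Y r x \<in> ?C" using S lm_smult[OF X] by auto
  have h4: "\<forall>x\<in>?C. \<forall>y\<in>?C. \<forall>z\<in>?C. madd Y (madd Y x y) z = madd Y x (madd Y y z)"
    using A lm_add[OF X] lm_assoc[OF X] by auto
  have h5: "\<forall>x\<in>?C. \<forall>y\<in>?C. madd Y x y = madd Y y x" using A lm_comm[OF X] by auto
  have h6: "\<forall>x\<in>?C. madd Y (mzero Y) x = x" using A Z lm_zero[OF X] lm_lzero[OF X] by auto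
  have h7: "\<forall>x\<in>?C. \<exists>y\<in>?C. madd Y x y = mzero Y"
  proof
    fix x assume x: "x \<in> ?C"
    then obtain a where a: "a \<in> mcarrier X" "x = \<phi> a" by blast
    have "madd Y x (\<phi> (msmult X (-1) a)) = mzero Y"
      using A[OF a(1) lm_smult[OF X a(1)]] lm_neg[OF X a(1)] Z a by simp
    then show "\<exists>y\<in>?C. madd Y x y = mzero Y" using lm_smult[OF X a(1)] by blast
  qed
  have h8: "\<forall>r. \<forall>x\<in>?C. \<forall>y\<in>?C. msmult Y r (madd Y x y) = madd Y (msmult Y r x) (msmult Y r y)"
    using A S lm_add[OF X] lm_smult[OF X] lm_dist1[OF X] by auto
  have h9: "\<forall>r s. \<forall>x\<in>?C. msmult Y (r + s) x = madd Y (msmult Y r x) (msmult Y s x)"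
    using A S lm_smult[OF X] lm_dist2[OF X] by auto
  have h10: "\<forall>r s. \<forall>x\<in>?C. msmult Y (r * s) x = msmult Y r (msmult Y s x)"
    using S lm_smult[OF X] lm_smult_assoc[OF X] by auto
  have h11: "\<forall>x\<in>?C. msmult Y 1 x = x" using S lm_one[OF X] by auto
  have "lmodule Y" unfolding lmodule_def C using h1 h2 h3 h4 h5 h6 h7 h8 h9 h10 h11 by blast
  moreover have "mhom X Y \<phi>" unfolding mhom_def C using A S by auto
  ultimately show ?thesis by blast
qed

definition tr :: "('r::ring_1, 'a) lmod \<Rightarrow> ('a \<Rightarrow> 'b) \<Rightarrow> ('r, 'b) lmod" where
  "tr X e = \<lparr>mcarrier = e ` mcarrier X,
     madd = (\<lambda>a b. e (madd X (inv_into (mcarrier X) e a) (inv_into (mcarrier X) e b))),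
     mzero = e (mzero X),
     msmult = (\<lambda>r a. e (msmult X r (inv_into (mcarrier X) e a)))\<rparr>"

lemma tr_carrier: "mcarrier (tr X e) = e ` mcarrier X" by (simp add: tr_def)

lemma tr_ok:
  assumes X: "lmodule X" and inj: "inj_on e (mcarrier X)"
  shows "lmodule (tr X e) \<and> mhom X (tr X e) e"
  by (rule lmodule_image[OF X]) (auto simp: tr_def inj)

lemma tr_inv_hom:
  assumes X: "lmodule X" and inj: "inj_on e (mcarrier X)"
  shows "mhom (tr X e) X (inv_into (mcarrier X) e)"
  unfolding mhom_def tr_def using inj lm_add[OF X] lm_smult[OF X] by (auto simp: inv_into_into)

definition sub :: "('r::ring_1, 'a) lmod \<Rightarrow> 'a set \<Rightarrow> ('r, 'a) lmod" where
  "sub X S = X\<lparr>mcarrier := S\<rparr>"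

lemma sub_simps[simp]: "mcarrier (sub X S) = S" "madd (sub X S) = madd X" "mzero (sub X S) = mzero X"
  "msmult (sub X S) = msmult X" by (simp_all add: sub_def)

lemma lmodule_sub:
  assumes X: "lmodule X" and K: "submod X K"
  shows "lmodule (sub X K)"
proof -
  have KS: "K \<subseteq> mcarrier X" and K0: "mzero X \<in> K" and Ka: "\<forall>a\<in>K. \<forall>b\<in>K. madd X a b \<in> K"
    and Ks: "\<forall>r. \<forall>a\<in>K. msmult X r a \<in> K" using K unfolding submod_def by blast+
  have inv: "\<forall>x\<in>K. \<exists>y\<in>K. madd X x y = mzero X" using lm_neg[OF X] KS Ks by blast
  have "\<forall>x\<in>K. \<forall>y\<in>K. \<forall>z\<in>K. madd X (madd X x y) z = madd X x (madd X y z)"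
    "\<forall>x\<in>K. \<forall>y\<in>K. madd X x y = madd X y x" "\<forall>x\<in>K. madd X (mzero X) x = x"
    "\<forall>r. \<forall>x\<in>K. \<forall>y\<in>K. msmult X r (madd X x y) = madd X (msmult X r x) (msmult X r y)"
    "\<forall>r s. \<forall>x\<in>K. msmult X (r + s) x = madd X (msmult X r x) (msmult X s x)"
    "\<forall>r s. \<forall>x\<in>K. msmult X (r * s) x = msmult X r (msmult X s x)"
    "\<forall>x\<in>K. msmult X 1 x = x"
    using KS lm_assoc[OF X] lm_comm[OF X] lm_lzero[OF X] lm_dist1[OF X] lm_dist2[OF X]
      lm_smult_assoc[OF X] lm_one[OF X] by (simp_all add: subset_iff)
  then show ?thesis unfolding lmodule_def sub_simps using K0 Ka Ks inv by blast
qed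

lemma mgenerated_self: assumes M: "lmodule M" shows "mgenerated M M"
  unfolding mgenerated_def
proof
  fix g assume g: "g \<in> mcarrier M"
  have "mhom M M id" unfolding mhom_def by simp
  moreover have "g = msum M (\<lambda>i. id g) 1" using lm_lzero[OF M g] by simp
  ultimately show "\<exists>n fs ms. (\<forall>i<n. mhom M M (fs i) \<and> ms i \<in> mcarrier M) \<and> g = msum M (\<lambda>i. fs i (ms i)) n"
    using g by (intro exI[of _ 1] exI[of _ "\<lambda>i. id"] exI[of _ "\<lambda>i. g"]) auto
qed

lemma mgenerated_epi:
  assumes M: "lmodule M" and G: "lmodule G" and h: "mhom M G \<phi>" and s: "mcarrier G \<subseteq> \<phi> ` mcarrier M"
  shows "mgenerated M G"
  unfolding mgenerated_def
proof
  fix g assume g: "g \<in> mcarrier G"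
  then obtain m where m: "m \<in> mcarrier M" "g = \<phi> m" using s by blast
  have "g = msum G (\<lambda>i. \<phi> m) 1" using lm_lzero[OF G g] m by simp
  then show "\<exists>n fs ms. (\<forall>i<n. mhom M G (fs i) \<and> ms i \<in> mcarrier M) \<and> g = msum G (\<lambda>i. fs i (ms i)) n"
    using h m by (intro exI[of _ 1] exI[of _ "\<lambda>i. \<phi>"] exI[of _ "\<lambda>i. m"]) auto
qed

lemma mhom_comp: "mhom X Y f \<Longrightarrow> mhom Y Z g \<Longrightarrow> mhom X Z (g \<circ> f)"
  unfolding mhom_def by auto

lemma mgenerated_hom:
  assumes M: "lmodule M" and X: "lmodule X" and Y: "lmodule Y" and gen: "mgenerated M X"
    and h: "mhom X Y \<phi>" and s: "mcarrier Y \<subseteq> \<phi> ` mcarrier X"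
  shows "mgenerated M Y"
  unfolding mgenerated_def
proof
  fix g assume g: "g \<in> mcarrier Y"
  then obtain x where x: "x \<in> mcarrier X" "g = \<phi> x" using s by blast
  then obtain n fs ms where F: "\<forall>i<n. mhom M X (fs i) \<and> ms i \<in> mcarrier M" "x = msum X (\<lambda>i. fs i (ms i)) n"
    using gen unfolding mgenerated_def by blast
  have "g = msum Y (\<lambda>i. \<phi> (fs i (ms i))) n"
    unfolding x(2) F(2) by (rule mhom_msum[OF X Y h]) (use F(1) in \<open>auto simp: mhom_def\<close>)
  moreover have "\<forall>i<n. mhom M Y (\<phi> \<circ> fs i) \<and> ms i \<in> mcarrier M" using F(1) h mhom_comp by blast
  ultimately show "\<exists>n fs ms. (\<forall>i<n. mhom M Y (fs i) \<and> ms i \<in> mcarrier M) \<and> g = msum Y (\<lambda>i. fs i (ms i)) n"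
    by (intro exI[of _ n] exI[of _ "\<lambda>i. \<phi> \<circ> fs i"] exI[of _ ms]) auto
qed

lemma in_sigmaI: fixes X :: "('r::ring_1, 'a) lmod" and G :: "('r, 'a) lmod" shows
  "lmodule X \<Longrightarrow> lmodule G \<Longrightarrow> mgenerated M G \<Longrightarrow> mhom X G f \<Longrightarrow> inj_on f (mcarrier X) \<Longrightarrow> in_sigma M X"
  unfolding in_sigma_def by blast


lemma lift_quot:
  fixes M :: "('r::ring_1, 'm) lmod"
  assumes M: "lmodule M" and P: "proj_sigma M TYPE('m set)" and K: "submod M K"
    and f: "mhom M (quot M K) f"
  shows "\<exists>e. mhom M M e \<and> (\<forall>m\<in>mcarrier M. coset M K (e m) = f m)"
proof -
  define sg where "sg = (\<lambda>m::'m. {m})"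
  have inj: "inj_on sg (mcarrier M)" unfolding sg_def inj_on_def by simp
  define A where "A = tr M sg"
  define B where "B = quot M K"
  define iv where "iv = inv_into (mcarrier M) sg"
  define g where "g = coset M K \<circ> iv"
  have A: "lmodule A" and hA: "mhom M A sg" using tr_ok[OF M inj] unfolding A_def by auto
  have B: "lmodule B" using lmodule_quot[OF M K] unfolding B_def .
  have hB: "mhom M B (coset M K)" using mhom_quot[OF M K] unfolding B_def .
  have iv: "mhom A M iv" using tr_inv_hom[OF M inj] unfolding A_def iv_def .
  have "in_sigma M A"
    by (rule in_sigmaI[OF A A mgenerated_epi[OF M A hA], of id])
       (auto simp: A_def tr_carrier mhom_def)
  moreover have "in_sigma M B"
    by (rule in_sigmaI[OF B B mgenerated_epi[OF M B hB], of id])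
       (auto simp: B_def quot_carrier[OF M K] mhom_def)
  moreover have "mhom A B g" unfolding g_def using mhom_comp[OF iv hB] .
  moreover have "g ` mcarrier A = mcarrier B"
    unfolding g_def A_def B_def tr_carrier quot_carrier[OF M K] iv_def using inj by (auto simp: image_comp)
  moreover have "mhom M B f" using f unfolding B_def .
  ultimately obtain h where h: "mhom M A h" "\<forall>m\<in>mcarrier M. g (h m) = f m"
    using P unfolding proj_sigma_def by blast
  have "mhom M M (iv \<circ> h)" using mhom_comp[OF h(1) iv] .
  moreover have "\<forall>m\<in>mcarrier M. coset M K ((iv \<circ> h) m) = f m" using h(2) unfolding g_def by simp
  ultimately show ?thesis by blast
qed

theorem claim1:
  fixes M :: "('r::ring_1, 'm) lmod"
  assumes M: "lmodule M" and P: "proj_sigma M TYPE('m set)"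
  shows "Nil_star M = mprod M (Nil_star M) M"
proof
  show "Nil_star M \<subseteq> mprod M (Nil_star M) M"
    unfolding mprod_def using Nil_star_sub[of M] by blast
next
  let ?K = "Nil_star M"
  have K: "submod M ?K" using Nil_star_submod[OF M] .
  show "mprod M ?K M \<subseteq> ?K"
  proof
    fix x assume x: "x \<in> mprod M ?K M"
    have xc: "x \<in> mcarrier M" using x unfolding mprod_def by blast
    have W: "lmodule (quot M ?K)" using lmodule_quot[OF M K] .
    have kill: "\<forall>f. mhom M (quot M ?K) f \<longrightarrow> (\<forall>n\<in>?K. f n = mzero (quot M ?K))"
    proof (intro allI impI ballI)
      fix f n assume f: "mhom M (quot M ?K) f" and n: "n \<in> ?K"
      obtain e where e: "mhom M M e" "\<forall>m\<in>mcarrier M. coset M ?K (e m) = f m"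
        using lift_quot[OF M P K f] by blast
      have nc: "n \<in> mcarrier M" using n Nil_star_sub[of M] by blast
      have en: "e n \<in> ?K" using Nil_star_hom[OF M e(1) n] .
      have "f n = coset M ?K (e n)" using e(2) nc by simp
      also have "e n = madd M (mzero M) (e n)" using lm_lzero[OF M] en Nil_star_sub[of M] by auto
      also have "coset M ?K \<dots> = coset M ?K (mzero M)" using coset_shift[OF M K lm_zero[OF M] en] .
      also have "\<dots> = mzero (quot M ?K)" using quot_zero[OF M K] by simp
      finally show "f n = mzero (quot M ?K)" .
    qed
    have "coset M ?K x = mzero (quot M ?K)"
      using x W kill mhom_quot[OF M K] unfolding mprod_def by blast
    then have "coset M ?K x = ?K" using quot_zero[OF M K] coset_zero[OF M K] by simp
    then show "x \<in> ?K" using coset_eq_K[OF M K xc] by blast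
  qed
qed


lemma cyclic_is_sub: "cyclic_sub X y = sub X (range (\<lambda>r. msmult X r y))"
  unfolding cyclic_sub_def sub_def by simp

lemma submod_cyclic: assumes X: "lmodule X" and y: "y \<in> mcarrier X"
  shows "submod X (range (\<lambda>r. msmult X r y))"
  unfolding submod_def
proof (intro conjI ballI allI)
  show "range (\<lambda>r. msmult X r y) \<subseteq> mcarrier X" using lm_smult[OF X y] by auto
  show "mzero X \<in> range (\<lambda>r. msmult X r y)" using lm_zero_smult[OF X y] by (metis rangeI)
next
  fix a b assume "a \<in> range (\<lambda>r. msmult X r y)" "b \<in> range (\<lambda>r. msmult X r y)"
  then obtain r s where "a = msmult X r y" "b = msmult X s y" by blast
  then show "madd X a b \<in> range (\<lambda>r. msmult X r y)" using lm_dist2[OF X y, of r s] by (metis rangeI)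
next
  fix t a assume "a \<in> range (\<lambda>r. msmult X r y)"
  then obtain r where "a = msmult X r y" by blast
  then show "msmult X t a \<in> range (\<lambda>r. msmult X r y)" using lm_smult_assoc[OF X y, of t r] by (metis rangeI)
qed

lemma lmodule_cyclic: "lmodule X \<Longrightarrow> y \<in> mcarrier X \<Longrightarrow> lmodule (cyclic_sub X y)"
  unfolding cyclic_is_sub by (rule lmodule_sub) (auto intro: submod_cyclic)

lemma cyclic_carrier: "mcarrier (cyclic_sub X y) = range (\<lambda>r. msmult X r y)"
  unfolding cyclic_sub_def by simp

lemma hom_cyclic_into:
  assumes X: "lmodule X" and y: "y \<in> mcarrier X" and h: "mhom X (cyclic_sub X y) f" and x: "x \<in> mcarrier X"
  shows "f x \<in> mcarrier X"
  using h x lm_smult[OF X y] unfolding mhom_def cyclic_carrier by auto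

lemma snil_cyclic:
  assumes X: "lmodule X" and y: "y \<in> mcarrier X" and h: "mhom X (cyclic_sub X y) f" and x: "x \<in> mcarrier X"
    and sn: "snil_pair X a x"
  shows "snil_pair X a (f x)"
proof -
  have "snil_pair (cyclic_sub X y) a (f x)" using snil_hom[OF X lmodule_cyclic[OF X y] h x sn] .
  then show ?thesis unfolding snil_pair_def cyclic_sub_def by simp
qed

lemma MNil_sub: "MNil_star M X \<subseteq> mcarrier X" unfolding MNil_star_def by blast

lemma MNil_to_Nil: assumes X: "lmodule X" shows "MNil_star X X \<subseteq> Nil_star X"
proof
  fix x assume "x \<in> MNil_star X X"
  then obtain n r ms xs fs where F: "x \<in> mcarrier X" "\<forall>i<n. ms i \<in> mcarrier X \<and> xs i \<in> mcarrier X \<and>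
        mhom X (cyclic_sub X (xs i)) (fs i) \<and> snil_pair X (r i) (fs i (ms i))"
     "x = msum X (\<lambda>i. msmult X (r i) (fs i (ms i))) n" unfolding MNil_star_def by blast
  have "\<forall>i<n. fs i (ms i) \<in> mcarrier X \<and> snil_pair X (r i) (fs i (ms i))"
    using F(2) hom_cyclic_into[OF X] by blast
  then show "x \<in> Nil_star X" using F(1,3) by (intro Nil_starI)
qed

lemma MNilI: "x \<in> mcarrier X \<Longrightarrow> \<forall>i<n. ms i \<in> mcarrier M \<and> xs i \<in> mcarrier X \<and>
        mhom M (cyclic_sub X (xs i)) (fs i) \<and> snil_pair X (r i) (fs i (ms i)) \<Longrightarrow>
     x = msum X (\<lambda>i. msmult X (r i) (fs i (ms i))) n \<Longrightarrow> x \<in> MNil_star M X"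
  unfolding MNil_star_def by blast

lemma MNil_zero: "lmodule X \<Longrightarrow> mzero X \<in> MNil_star M X"
  by (rule MNilI[where n=0]) (auto intro: lm_zero)

lemma MNil_add:
  assumes X: "lmodule X" and x: "x \<in> MNil_star M X" and y: "y \<in> MNil_star M X"
  shows "madd X x y \<in> MNil_star M X"
proof -
  obtain n r ms xs fs where A: "\<forall>i<n. ms i \<in> mcarrier M \<and> xs i \<in> mcarrier X \<and>
        mhom M (cyclic_sub X (xs i)) (fs i) \<and> snil_pair X (r i) (fs i (ms i))"
     "x = msum X (\<lambda>i. msmult X (r i) (fs i (ms i))) n" using x unfolding MNil_star_def by blast
  obtain k r' ms' xs' fs' where B: "\<forall>i<k. ms' i \<in> mcarrier M \<and> xs' i \<in> mcarrier X \<and>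
        mhom M (cyclic_sub X (xs' i)) (fs' i) \<and> snil_pair X (r' i) (fs' i (ms' i))"
     "y = msum X (\<lambda>i. msmult X (r' i) (fs' i (ms' i))) k" using y unfolding MNil_star_def by blast
  define R where "R i = (if i < n then r i else r' (i - n))" for i
  define MS where "MS i = (if i < n then ms i else ms' (i - n))" for i
  define XS where "XS i = (if i < n then xs i else xs' (i - n))" for i
  define FS where "FS i = (if i < n then fs i else fs' (i - n))" for i
  have f1: "\<And>i. i < n \<Longrightarrow> msmult X (r i) (fs i (ms i)) \<in> mcarrier X"
    using A(1) hom_cyclic_into[OF X] lm_smult[OF X] unfolding mhom_def cyclic_carrier by fastforce
  have f2: "\<And>i. i < k \<Longrightarrow> msmult X (r' i) (fs' i (ms' i)) \<in> mcarrier X"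
    using B(1) hom_cyclic_into[OF X] lm_smult[OF X] unfolding mhom_def cyclic_carrier by fastforce
  have "madd X x y = msum X (\<lambda>i. if i < n then msmult X (r i) (fs i (ms i)) else msmult X (r' (i-n)) (fs' (i-n) (ms' (i-n)))) (n + k)"
    unfolding A(2) B(2) by (rule msum_append[OF X, symmetric]) (use f1 f2 in auto)
  also have "\<dots> = msum X (\<lambda>i. msmult X (R i) (FS i (MS i))) (n + k)"
    by (rule msum_cong) (simp add: R_def FS_def MS_def)
  finally have e: "madd X x y = msum X (\<lambda>i. msmult X (R i) (FS i (MS i))) (n + k)" .
  have P: "\<forall>i<n+k. MS i \<in> mcarrier M \<and> XS i \<in> mcarrier X \<and>
        mhom M (cyclic_sub X (XS i)) (FS i) \<and> snil_pair X (R i) (FS i (MS i))"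
  proof (intro allI impI)
    fix i assume i: "i < n + k"
    show "MS i \<in> mcarrier M \<and> XS i \<in> mcarrier X \<and> mhom M (cyclic_sub X (XS i)) (FS i) \<and> snil_pair X (R i) (FS i (MS i))"
    proof (cases "i < n")
      case True then show ?thesis using A(1) by (simp add: R_def FS_def MS_def XS_def)
    next
      case False then have "i - n < k" using i by simp
      then show ?thesis using B(1) False by (simp add: R_def FS_def MS_def XS_def)
    qed
  qed
  have "madd X x y \<in> mcarrier X" using x y MNil_sub[of M X] by (intro lm_add[OF X]) auto
  then show ?thesis using P e by (intro MNilI)
qed

definition CORE :: "('r::ring_1, 'm) lmod \<Rightarrow> bool" where
  "CORE M \<longleftrightarrow> (\<forall>x\<in>mcarrier M. \<exists>n ys hs. (\<forall>j<n. ys j \<in> mcarrier M \<and> mhom M (cyclic_sub M (ys j)) (hs j))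
      \<and> x = msum M (\<lambda>j. hs j x) n)"

lemma Nil_to_MNil:
  assumes M: "lmodule M" and C: "CORE M"
  shows "Nil_star M \<subseteq> MNil_star M M"
proof
  fix x assume x: "x \<in> Nil_star M"
  obtain n a xs where A: "\<forall>i<n. xs i \<in> mcarrier M \<and> snil_pair M (a i) (xs i)"
      "x = msum M (\<lambda>i. msmult M (a i) (xs i)) n" using x unfolding Nil_star_def by blast
  have trm: "msmult M (a i) (xs i) \<in> MNil_star M M" if i: "i < n" for i
  proof -
    have xi: "xs i \<in> mcarrier M" "snil_pair M (a i) (xs i)" using A(1) i by auto
    obtain k ys hs where H: "\<forall>j<k. ys j \<in> mcarrier M \<and> mhom M (cyclic_sub M (ys j)) (hs j)"
      "xs i = msum M (\<lambda>j. hs j (xs i)) k" using C xi(1) unfolding CORE_def by blast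
    have hc: "\<And>j. j < k \<Longrightarrow> hs j (xs i) \<in> mcarrier M" using H(1) hom_cyclic_into[OF M _ _ xi(1)] by blast
    have "msmult M (a i) (xs i) = msmult M (a i) (msum M (\<lambda>j. hs j (xs i)) k)" using H(2) by simp
    also have "\<dots> = msum M (\<lambda>j. msmult M (a i) (hs j (xs i))) k"
      by (rule msum_smult[OF M]) (use hc in auto)
    finally have e: "msmult M (a i) (xs i) = msum M (\<lambda>j. msmult M ((\<lambda>_. a i) j) (hs j ((\<lambda>_. xs i) j))) k" by simp
    have "\<forall>j<k. (\<lambda>_. xs i) j \<in> mcarrier M \<and> ys j \<in> mcarrier M \<and> mhom M (cyclic_sub M (ys j)) (hs j)
       \<and> snil_pair M ((\<lambda>_. a i) j) (hs j ((\<lambda>_. xs i) j))"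
      using H(1) xi snil_cyclic[OF M] by auto
    moreover have "msmult M (a i) (xs i) \<in> mcarrier M" using lm_smult[OF M xi(1)] .
    ultimately show ?thesis using e by (intro MNilI)
  qed
  have "\<forall>m\<le>n. msum M (\<lambda>i. msmult M (a i) (xs i)) m \<in> MNil_star M M"
  proof (intro allI impI)
    fix m assume "m \<le> n" then show "msum M (\<lambda>i. msmult M (a i) (xs i)) m \<in> MNil_star M M"
    proof (induction m)
      case 0 then show ?case using MNil_zero[OF M] by simp
    next
      case (Suc m) then show ?case by simp (rule MNil_add[OF M], auto intro: trm)
    qed
  qed
  then show "x \<in> MNil_star M M" using A(2) by simp
qed


definition AM :: "('r, 'a) lmod \<Rightarrow> 'a monoid" where
  "AM X = \<lparr>carrier = mcarrier X, mult = madd X, one = mzero X\<rparr>"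

lemma AM_simps[simp]: "carrier (AM X) = mcarrier X" "mult (AM X) = madd X" "one (AM X) = mzero X"
  by (simp_all add: AM_def)

lemma AM_cm: assumes X: "lmodule X" shows "comm_monoid (AM X)"
proof (rule comm_monoidI)
  fix x y z assume "x \<in> carrier (AM X)" "y \<in> carrier (AM X)" "z \<in> carrier (AM X)"
  then show "x \<otimes>\<^bsub>AM X\<^esub> y \<otimes>\<^bsub>AM X\<^esub> z = x \<otimes>\<^bsub>AM X\<^esub> (y \<otimes>\<^bsub>AM X\<^esub> z)"
    using lm_assoc[OF X] by simp
next
  fix x y assume "x \<in> carrier (AM X)" "y \<in> carrier (AM X)"
  then show "x \<otimes>\<^bsub>AM X\<^esub> y = y \<otimes>\<^bsub>AM X\<^esub> x" using lm_comm[OF X] by simp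
qed (use X in \<open>auto simp: lm_add lm_zero lm_lzero\<close>)

lemma finprod_smult:
  assumes X: "lmodule X" and F: "finite F" and u: "\<And>i. i \<in> F \<Longrightarrow> u i \<in> mcarrier X"
  shows "msmult X r (finprod (AM X) u F) = finprod (AM X) (\<lambda>i. msmult X r (u i)) F"
  using F u
proof (induction F rule: finite_induct)
  case empty
  have "finprod (AM X) u {} = mzero X" "finprod (AM X) (\<lambda>i. msmult X r (u i)) {} = mzero X"
    using comm_monoid.finprod_empty[OF AM_cm[OF X]] by (metis AM_simps(3))+
  then show ?case using lm_smult_zero[OF X] by simp
next
  case (insert a F)
  have CM: "comm_monoid (AM X)" using AM_cm[OF X] .
  have "finprod (AM X) u (insert a F) = madd X (u a) (finprod (AM X) u F)"
    using comm_monoid.finprod_insert[OF CM insert(1,2)] insert(4) by (auto simp: Pi_def)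
  moreover have "finprod (AM X) (\<lambda>i. msmult X r (u i)) (insert a F) =
      madd X (msmult X r (u a)) (finprod (AM X) (\<lambda>i. msmult X r (u i)) F)"
    using comm_monoid.finprod_insert[OF CM insert(1,2)] insert(4) lm_smult[OF X] by (auto simp: Pi_def)
  moreover have "finprod (AM X) u F \<in> mcarrier X"
    using comm_monoid.finprod_closed[OF CM, of u F] insert(4) by (auto simp: Pi_def)
  ultimately show ?case using insert lm_dist1[OF X] by simp
qed

definition DS :: "('r::ring_1, 'm) lmod \<Rightarrow> 'i set \<Rightarrow> ('i \<Rightarrow> 'm set) \<Rightarrow> ('r, 'i \<Rightarrow> 'm) lmod" where
  "DS M I N = \<lparr>mcarrier = {u. (\<forall>i\<in>I. u i \<in> N i) \<and> (\<forall>i. i \<notin> I \<longrightarrow> u i = mzero M) \<and> finite {i. u i \<noteq> mzero M}},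
     madd = (\<lambda>u v i. madd M (u i) (v i)),
     mzero = (\<lambda>i. mzero M),
     msmult = (\<lambda>r u i. msmult M r (u i))\<rparr>"

lemma DS_simps: "madd (DS M I N) = (\<lambda>u v i. madd M (u i) (v i))" "mzero (DS M I N) = (\<lambda>i. mzero M)"
  "msmult (DS M I N) = (\<lambda>r u i. msmult M r (u i))"
  "mcarrier (DS M I N) = {u. (\<forall>i\<in>I. u i \<in> N i) \<and> (\<forall>i. i \<notin> I \<longrightarrow> u i = mzero M) \<and> finite {i. u i \<noteq> mzero M}}"
  by (simp_all add: DS_def)

lemma DS_sub: "DS M I N = sub (DS M I (\<lambda>_. mcarrier M)) (mcarrier (DS M I N))"
  unfolding DS_def sub_def by simp

context
  fixes M :: "('r::ring_1, 'm) lmod" and I :: "'i set" and N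
  assumes M: "lmodule M" and N: "\<And>i. i \<in> I \<Longrightarrow> submod M (N i)"
begin

lemma N_sub: "i \<in> I \<Longrightarrow> N i \<subseteq> mcarrier M" using N unfolding submod_def by blast

lemma DS_val: "u \<in> mcarrier (DS M I N) \<Longrightarrow> u i \<in> mcarrier M"
  unfolding DS_simps using N_sub lm_zero[OF M] by (cases "i \<in> I") auto

lemma lmodule_DS: "lmodule (DS M I N)"
proof -
  let ?C = "mcarrier (DS M I N)"
  have Nz: "i \<in> I \<Longrightarrow> mzero M \<in> N i" for i using N unfolding submod_def by blast
  have Na: "i \<in> I \<Longrightarrow> a \<in> N i \<Longrightarrow> b \<in> N i \<Longrightarrow> madd M a b \<in> N i" for i a b using N unfolding submod_def by blast
  have Ns: "i \<in> I \<Longrightarrow> a \<in> N i \<Longrightarrow> msmult M r a \<in> N i" for i a r using N unfolding submod_def by blast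
  have z0: "madd M (mzero M) (mzero M) = mzero M" using lm_lzero[OF M lm_zero[OF M]] .
  have s0: "msmult M r (mzero M) = mzero M" for r using lm_smult_zero[OF M] .
  have h1: "mzero (DS M I N) \<in> ?C" unfolding DS_simps using Nz by auto
  have h2: "\<forall>x\<in>?C. \<forall>y\<in>?C. madd (DS M I N) x y \<in> ?C"
  proof (intro ballI)
    fix x y assume x: "x \<in> ?C" and y: "y \<in> ?C"
    have "{i. madd M (x i) (y i) \<noteq> mzero M} \<subseteq> {i. x i \<noteq> mzero M} \<union> {i. y i \<noteq> mzero M}" using z0 by auto
    then show "madd (DS M I N) x y \<in> ?C" using x y Na z0 unfolding DS_simps by (auto intro: finite_subset)
  qed
  have h3: "\<forall>r. \<forall>x\<in>?C. msmult (DS M I N) r x \<in> ?C"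
  proof (intro allI ballI)
    fix r x assume x: "x \<in> ?C"
    have "{i. msmult M r (x i) \<noteq> mzero M} \<subseteq> {i. x i \<noteq> mzero M}" using s0 by auto
    then show "msmult (DS M I N) r x \<in> ?C" using x Ns s0 unfolding DS_simps by (auto intro: finite_subset)
  qed
  note V = DS_val
  have h4: "\<forall>x\<in>?C. \<forall>y\<in>?C. \<forall>z\<in>?C. madd (DS M I N) (madd (DS M I N) x y) z = madd (DS M I N) x (madd (DS M I N) y z)"
    using V lm_assoc[OF M] unfolding DS_simps(1) by (simp add: fun_eq_iff)
  have h5: "\<forall>x\<in>?C. \<forall>y\<in>?C. madd (DS M I N) x y = madd (DS M I N) y x"
    using V lm_comm[OF M] unfolding DS_simps(1) by (simp add: fun_eq_iff)
  have h6: "\<forall>x\<in>?C. madd (DS M I N) (mzero (DS M I N)) x = x"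
    using V lm_lzero[OF M] unfolding DS_simps(1,2) by (simp add: fun_eq_iff)
  have h7: "\<forall>x\<in>?C. \<exists>y\<in>?C. madd (DS M I N) x y = mzero (DS M I N)"
  proof
    fix x assume x: "x \<in> ?C"
    have "msmult (DS M I N) (-1) x \<in> ?C" using h3 x by blast
    moreover have "madd (DS M I N) x (msmult (DS M I N) (-1) x) = mzero (DS M I N)"
      using V[OF x] lm_neg[OF M] unfolding DS_simps by (simp add: fun_eq_iff)
    ultimately show "\<exists>y\<in>?C. madd (DS M I N) x y = mzero (DS M I N)" by blast
  qed
  have h8: "\<forall>r. \<forall>x\<in>?C. \<forall>y\<in>?C. msmult (DS M I N) r (madd (DS M I N) x y) = madd (DS M I N) (msmult (DS M I N) r x) (msmult (DS M I N) r y)"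
    using V lm_dist1[OF M] unfolding DS_simps(1,3) by (simp add: fun_eq_iff)
  have h9: "\<forall>r s. \<forall>x\<in>?C. msmult (DS M I N) (r + s) x = madd (DS M I N) (msmult (DS M I N) r x) (msmult (DS M I N) s x)"
    using V lm_dist2[OF M] unfolding DS_simps(1,3) by (simp add: fun_eq_iff)
  have h10: "\<forall>r s. \<forall>x\<in>?C. msmult (DS M I N) (r * s) x = msmult (DS M I N) r (msmult (DS M I N) s x)"
    using V lm_smult_assoc[OF M] unfolding DS_simps(3) by (simp add: fun_eq_iff)
  have h11: "\<forall>x\<in>?C. msmult (DS M I N) 1 x = x"
    using V lm_one[OF M] unfolding DS_simps(3) by (simp add: fun_eq_iff)
  show ?thesis unfolding lmodule_def
    by (intro conjI, fact h1, fact h2, fact h3, fact h4, fact h5, fact h6, fact h7, fact h8, fact h9, fact h10, fact h11)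
qed

definition gsum :: "('i \<Rightarrow> 'm) \<Rightarrow> 'm" where
  "gsum u = finprod (AM M) u {i. u i \<noteq> mzero M}"

lemma gsum_eq:
  assumes u: "u \<in> mcarrier (DS M I N)" and F: "finite F" "{i. u i \<noteq> mzero M} \<subseteq> F"
  shows "gsum u = finprod (AM M) u F"
  unfolding gsum_def
proof (rule comm_monoid.finprod_mono_neutral_cong_left[OF AM_cm[OF M] F])
  show "\<And>i. i \<in> F - {i. u i \<noteq> mzero M} \<Longrightarrow> u i = \<one>\<^bsub>AM M\<^esub>" by simp
  show "\<And>x. x \<in> {i. u i \<noteq> mzero M} \<Longrightarrow> u x = u x" by simp
  show "u \<in> F \<rightarrow> carrier (AM M)" using DS_val[OF u] by simp
qed

lemma gsum_closed: "u \<in> mcarrier (DS M I N) \<Longrightarrow> gsum u \<in> mcarrier M"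
  unfolding gsum_def using comm_monoid.finprod_closed[OF AM_cm[OF M], of u "{i. u i \<noteq> mzero M}"] DS_val by (auto simp: Pi_def)

lemma gsum_image_ok:
  "lmodule (sub M (gsum ` mcarrier (DS M I N))) \<and> mhom (DS M I N) (sub M (gsum ` mcarrier (DS M I N))) gsum"
proof (rule lmodule_image[OF lmodule_DS])
  show "mcarrier (sub M (gsum ` mcarrier (DS M I N))) = gsum ` mcarrier (DS M I N)" by simp
  have "finprod (AM M) (\<lambda>i::'i. mzero M) {} = mzero M" using comm_monoid.finprod_empty[OF AM_cm[OF M]] by (metis AM_simps(3))
  then show "mzero (sub M (gsum ` mcarrier (DS M I N))) = gsum (mzero (DS M I N))"
    unfolding gsum_def DS_simps by simp
next
  fix a b assume a: "a \<in> mcarrier (DS M I N)" and b: "b \<in> mcarrier (DS M I N)"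
  define F where "F = {i. a i \<noteq> mzero M} \<union> {i. b i \<noteq> mzero M}"
  have F: "finite F" using a b unfolding F_def DS_simps by auto
  have ab: "madd (DS M I N) a b \<in> mcarrier (DS M I N)" using lmodule_DS a b by (rule lm_add)
  have sub: "{i. madd (DS M I N) a b i \<noteq> mzero M} \<subseteq> F"
    using lm_lzero[OF M lm_zero[OF M]] unfolding F_def DS_simps by auto
  have "gsum (madd (DS M I N) a b) = finprod (AM M) (\<lambda>i. madd M (a i) (b i)) F"
    using gsum_eq[OF ab F sub] unfolding DS_simps by simp
  also have "\<dots> = madd M (finprod (AM M) a F) (finprod (AM M) b F)"
    using comm_monoid.finprod_multf[OF AM_cm[OF M], of a F b] DS_val a b by (auto simp: Pi_def)
  also have "\<dots> = madd M (gsum a) (gsum b)"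
    using gsum_eq[OF a F] gsum_eq[OF b F] unfolding F_def by auto
  finally show "madd (sub M (gsum ` mcarrier (DS M I N))) (gsum a) (gsum b) = gsum (madd (DS M I N) a b)" by simp
next
  fix r a assume a: "a \<in> mcarrier (DS M I N)"
  define F where "F = {i. a i \<noteq> mzero M}"
  have F: "finite F" using a unfolding F_def DS_simps by auto
  have ra: "msmult (DS M I N) r a \<in> mcarrier (DS M I N)" using lmodule_DS a by (rule lm_smult)
  have sub: "{i. msmult (DS M I N) r a i \<noteq> mzero M} \<subseteq> F"
    using lm_smult_zero[OF M] unfolding F_def DS_simps by auto
  have "gsum (msmult (DS M I N) r a) = finprod (AM M) (\<lambda>i. msmult M r (a i)) F"
    using gsum_eq[OF ra F sub] unfolding DS_simps by simp
  also have "\<dots> = msmult M r (finprod (AM M) a F)"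
    using finprod_smult[OF M F] DS_val[OF a] by simp
  also have "\<dots> = msmult M r (gsum a)" using gsum_def F_def by simp
  finally show "msmult (sub M (gsum ` mcarrier (DS M I N))) r (gsum a) = gsum (msmult (DS M I N) r a)" by simp
qed

end


lemma tr_sub_hom:
  assumes S: "S \<subseteq> mcarrier Y" and inj: "inj_on e (mcarrier Y)"
  shows "mhom (tr (sub Y S) e) (tr Y e) id"
proof -
  have injS: "inj_on e S" using inj S by (rule inj_on_subset)
  have iS: "x \<in> S \<Longrightarrow> inv_into S e (e x) = x" for x using injS by simp
  have iY: "x \<in> S \<Longrightarrow> inv_into (mcarrier Y) e (e x) = x" for x using inj S by auto
  show ?thesis unfolding mhom_def tr_def using S iS iY by auto
qed

lemma submod_carrier: "lmodule M \<Longrightarrow> submod M (mcarrier M)"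
  unfolding submod_def by (auto intro: lm_zero lm_add lm_smult)

lemma mgenerated_DS:
  fixes M :: "('r::ring_1, 'm) lmod" and I :: "'i set"
  assumes M: "lmodule M"
  shows "mgenerated M (DS M I (\<lambda>_. mcarrier M))"
proof -
  let ?G = "DS M I (\<lambda>_. mcarrier M)"
  have G: "lmodule ?G" using lmodule_DS[OF M submod_carrier[OF M]] .
  define Gs where "Gs = {g. \<exists>n fs ms. (\<forall>i<n. mhom M ?G (fs i) \<and> ms i \<in> mcarrier M) \<and> g = msum ?G (\<lambda>i. fs i (ms i)) n}"
  define io where "io i m = (\<lambda>j::'i. if j = i then m else mzero M)" for i and m :: 'm
  have io: "mhom M ?G (io i)" if i: "i \<in> I" for i
  proof -
    have "io i m \<in> mcarrier ?G" if "m \<in> mcarrier M" for m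
    proof -
      have "{j. io i m j \<noteq> mzero M} \<subseteq> {i}" unfolding io_def by auto
      then show ?thesis using i that lm_zero[OF M] unfolding DS_simps io_def by (auto intro: finite_subset)
    qed
    moreover have "io i (madd M x y) = madd ?G (io i x) (io i y)" if "x \<in> mcarrier M" "y \<in> mcarrier M" for x y
      unfolding DS_simps io_def using lm_lzero[OF M lm_zero[OF M]] by (auto simp: fun_eq_iff)
    moreover have "io i (msmult M r x) = msmult ?G r (io i x)" if "x \<in> mcarrier M" for r x
      unfolding DS_simps io_def using lm_smult_zero[OF M] by (auto simp: fun_eq_iff)
    ultimately show ?thesis unfolding mhom_def by blast
  qed
  have main: "\<forall>u\<in>mcarrier ?G. {i. u i \<noteq> mzero M} \<subseteq> F \<longrightarrow> u \<in> Gs" if F: "finite F" for F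
    using F
  proof (induction F rule: finite_induct)
    case empty
    show ?case
    proof (intro ballI impI)
      fix u assume u: "u \<in> mcarrier ?G" "{i. u i \<noteq> mzero M} \<subseteq> {}"
      then have "u = mzero ?G" unfolding DS_simps by (auto simp: fun_eq_iff)
      then show "u \<in> Gs" unfolding Gs_def
        by (intro CollectI exI[of _ 0] exI[of _ "\<lambda>_ m. (\<lambda>_::'i. m)"] exI[of _ "\<lambda>_. mzero M"]) auto
    qed
  next
    case (insert i F)
    show ?case
    proof (intro ballI impI)
      fix u assume u: "u \<in> mcarrier ?G" "{i. u i \<noteq> mzero M} \<subseteq> insert i F"
      show "u \<in> Gs"
      proof (cases "u i = mzero M")
        case True
        then have "{i. u i \<noteq> mzero M} \<subseteq> F" using u(2) by auto
        then show ?thesis using insert.IH u(1) by blast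
      next
        case False
        then have iI: "i \<in> I" using u(1) unfolding DS_simps by auto
        define u' where "u' = u(i := mzero M)"
        have u'c: "u' \<in> mcarrier ?G" using u(1) lm_zero[OF M] unfolding DS_simps u'_def
          by (auto intro: finite_subset[of _ "{i. u i \<noteq> mzero M}"])
        have "{i. u' i \<noteq> mzero M} \<subseteq> F" using u(2) unfolding u'_def by auto
        then have "u' \<in> Gs" using insert.IH u'c by blast
        then obtain n fs ms where F1: "\<forall>j<n. mhom M ?G (fs j) \<and> ms j \<in> mcarrier M" "u' = msum ?G (\<lambda>j. fs j (ms j)) n"
          unfolding Gs_def by blast
        have uic: "u i \<in> mcarrier M" using DS_val[OF M submod_carrier[OF M] u(1)] .
        have "u = madd ?G u' (io i (u i))"
        proof -
          have "u j \<in> mcarrier M" for j using DS_val[OF M submod_carrier[OF M] u(1)] .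
          then show ?thesis unfolding DS_simps u'_def io_def using lm_rzero[OF M] lm_lzero[OF M uic]
            by (auto simp: fun_eq_iff)
        qed
        also have "\<dots> = msum ?G (\<lambda>j. (fs(n := io i)) j ((ms(n := u i)) j)) (Suc n)"
        proof -
          have "msum ?G (\<lambda>j. (fs(n := io i)) j ((ms(n := u i)) j)) n = msum ?G (\<lambda>j. fs j (ms j)) n"
            by (rule msum_cong) simp
          then show ?thesis using F1(2) by simp
        qed
        finally show ?thesis unfolding Gs_def using F1(1) io[OF iI] uic
          by (intro CollectI exI[of _ "Suc n"] exI[of _ "fs(n := io i)"] exI[of _ "ms(n := u i)"]) (auto simp: less_Suc_eq)
      qed
    qed
  qed
  show ?thesis unfolding mgenerated_def
  proof
    fix g assume g: "g \<in> mcarrier ?G"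
    then have "finite {i. g i \<noteq> mzero M}" unfolding DS_simps by auto
    then have "g \<in> Gs" using main g by blast
    then show "\<exists>n fs ms. (\<forall>i<n. mhom M ?G (fs i) \<and> ms i \<in> mcarrier M) \<and> g = msum ?G (\<lambda>i. fs i (ms i)) n"
      unfolding Gs_def by blast
  qed
qed


lemma Glemma:
  fixes M :: "('r::ring_1, 'm) lmod" and I :: "'i set" and enc :: "('i \<Rightarrow> 'm) \<Rightarrow> 'm set"
  assumes M: "lmodule M" and P: "proj_sigma M TYPE('m set)"
    and N: "\<And>i. i \<in> I \<Longrightarrow> submod M (N i)"
    and enc: "inj_on enc (mcarrier (DS M I (\<lambda>_. mcarrier M)))"
    and f: "mhom M (sub M (gsum M ` mcarrier (DS M I N))) f"
  shows "\<exists>h. mhom M (DS M I N) h \<and> (\<forall>m\<in>mcarrier M. gsum M (h m) = f m)"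
proof -
  let ?D = "DS M I N" and ?G' = "DS M I (\<lambda>_. mcarrier M)"
  let ?S = "gsum M ` mcarrier ?D"
  have D: "lmodule ?D" using lmodule_DS[of M I N, OF M N] .
  have G': "lmodule ?G'" using lmodule_DS[OF M submod_carrier[OF M]] .
  have DG: "mcarrier ?D \<subseteq> mcarrier ?G'" using N unfolding DS_simps submod_def by blast
  have encD: "inj_on enc (mcarrier ?D)" using inj_on_subset[OF enc DG] .
  define A where "A = tr ?D enc"
  define G where "G = tr ?G' enc"
  have A: "lmodule A" using tr_ok[OF D encD] unfolding A_def by blast
  have G: "lmodule G" and hG: "mhom ?G' G enc" using tr_ok[OF G' enc] unfolding G_def by blast+
  have genG: "mgenerated M G"
    by (rule mgenerated_hom[OF M G' G mgenerated_DS[OF M] hG]) (simp add: G_def tr_carrier)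
  have AG: "mhom A G id"
    unfolding A_def G_def by (subst DS_sub) (rule tr_sub_hom[OF DG enc])
  have sA: "in_sigma M A" by (rule in_sigmaI[OF A G genG AG]) simp
  define sg where "sg = (\<lambda>m::'m. {m})"
  have injM: "inj_on sg (mcarrier M)" unfolding sg_def inj_on_def by simp
  have SM: "?S \<subseteq> mcarrier M" using gsum_closed[of M I N, OF M N] by (simp add: image_subset_iff)
  have injS: "inj_on sg ?S" using inj_on_subset[OF injM SM] .
  have Sok: "lmodule (sub M ?S)" and hgs: "mhom ?D (sub M ?S) (gsum M)" using gsum_image_ok[of M I N, OF M N] by blast+
  define B where "B = tr (sub M ?S) sg"
  define GB where "GB = tr M sg"
  have B: "lmodule B" and hB: "mhom (sub M ?S) B sg" using tr_ok[OF Sok] injS unfolding B_def by auto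
  have GB: "lmodule GB" and hGB: "mhom M GB sg" using tr_ok[OF M injM] unfolding GB_def by blast+
  have BGB: "mhom B GB id" unfolding B_def GB_def using tr_sub_hom[OF SM injM] .
  have sB: "in_sigma M B"
    by (rule in_sigmaI[OF B GB mgenerated_epi[OF M GB hGB] BGB]) (auto simp: GB_def tr_carrier)
  define iv where "iv = inv_into (mcarrier ?D) enc"
  have iv: "mhom A ?D iv" unfolding A_def iv_def using tr_inv_hom[OF D encD] .
  define g where "g = sg \<circ> gsum M \<circ> iv"
  have hg: "mhom A B g" unfolding g_def using mhom_comp[OF mhom_comp[OF iv hgs] hB] by (simp add: comp_assoc)
  have sur: "g ` mcarrier A = mcarrier B"
    unfolding g_def A_def B_def tr_carrier iv_def using encD by (auto simp: image_comp)
  have hf: "mhom M B (sg \<circ> f)" using mhom_comp[OF f hB] .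
  obtain h where h: "mhom M A h" "\<forall>m\<in>mcarrier M. g (h m) = (sg \<circ> f) m"
    using P sA sB hg sur hf unfolding proj_sigma_def by blast
  have "mhom M ?D (iv \<circ> h)" using mhom_comp[OF h(1) iv] .
  moreover have "\<forall>m\<in>mcarrier M. gsum M ((iv \<circ> h) m) = f m"
    using h(2) unfolding g_def sg_def by simp
  ultimately show ?thesis by blast
qed


lemma msum_finprod:
  assumes X: "lmodule X" and f: "\<And>i. i < n \<Longrightarrow> f i \<in> mcarrier X"
  shows "finprod (AM X) f {..<n} = msum X f n"
  using f
proof (induction n)
  case 0
  then show ?case using comm_monoid.finprod_empty[OF AM_cm[OF X]] by (metis AM_simps(3) lessThan_0 msum.simps(1))
next
  case (Suc n)
  have CM: "comm_monoid (AM X)" using AM_cm[OF X] .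
  have "finprod (AM X) f {..<Suc n} = madd X (f n) (finprod (AM X) f {..<n})"
    unfolding lessThan_Suc using comm_monoid.finprod_insert[OF CM, of "{..<n}" n f] Suc.prems by (auto simp: Pi_def)
  also have "\<dots> = madd X (msum X f n) (f n)"
    using Suc lm_comm[OF X] msum_closed[OF X, of n f] by simp
  finally show ?case by simp
qed

lemma mhom_component:
  assumes h: "mhom M (DS M I N) h" and i: "i \<in> I"
  shows "mhom M (sub M (N i)) (\<lambda>m. h m i)"
  using h i unfolding mhom_def DS_simps by auto

lemma core_from_h:
  fixes M :: "('r::ring_1, 'm) lmod" and I :: "'i set"
  assumes M: "lmodule M" and N: "\<And>i. i \<in> I \<Longrightarrow> submod M (N i)"
    and h: "mhom M (DS M I N) h" and x: "x \<in> mcarrier M"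
  shows "\<exists>n b. (\<forall>k<n. b k \<in> I) \<and> gsum M (h x) = msum M (\<lambda>k. h x (b k)) n"
proof -
  have hx: "h x \<in> mcarrier (DS M I N)" using h x unfolding mhom_def by blast
  define F where "F = {i. h x i \<noteq> mzero M}"
  have F: "finite F" using hx unfolding F_def DS_simps by auto
  have FI: "F \<subseteq> I" using hx unfolding F_def DS_simps by auto
  obtain b where b: "bij_betw b {0..<card F} F" using ex_bij_betw_nat_finite[OF F] by blast
  have val: "h x i \<in> mcarrier M" for i using DS_val[OF M N hx] .
  have "gsum M (h x) = finprod (AM M) (h x) F" using gsum_eq[OF M N hx F] unfolding F_def by simp
  also have "F = b ` {..<card F}" using b unfolding bij_betw_def by (simp add: atLeast0LessThan)
  also have "finprod (AM M) (h x) (b ` {..<card F}) = finprod (AM M) (\<lambda>k. h x (b k)) {..<card F}"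
    using comm_monoid.finprod_reindex[OF AM_cm[OF M], of "h x" b "{..<card F}"] b val
    unfolding bij_betw_def by (simp add: Pi_def atLeast0LessThan)
  also have "\<dots> = msum M (\<lambda>k. h x (b k)) (card F)" by (rule msum_finprod[OF M]) (rule val)
  finally have "gsum M (h x) = msum M (\<lambda>k. h x (b k)) (card F)" .
  moreover have "\<forall>k<card F. b k \<in> I"
  proof (intro allI impI)
    fix k assume "k < card F"
    then have "b k \<in> F" using bij_betw_apply[OF b] by simp
    then show "b k \<in> I" using FI by blast
  qed
  ultimately show ?thesis by blast
qed

lemma core_infinite:
  fixes M :: "('r::ring_1, 'm) lmod"
  assumes M: "lmodule M" and P: "proj_sigma M TYPE('m set)" and inf: "\<not> finite (UNIV :: 'm set)"
  shows "CORE M"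
proof -
  obtain p :: "'m \<times> 'm \<Rightarrow> 'm" where p: "bij_betw p (UNIV \<times> UNIV) UNIV"
    using card_of_Times_same_infinite[OF inf] card_of_ordIso[of "UNIV \<times> UNIV" "UNIV :: 'm set"] by auto
  have injp: "inj p" using p unfolding bij_betw_def by simp
  define enc :: "('m \<Rightarrow> 'm) \<Rightarrow> 'm set" where "enc u = range (\<lambda>i. p (i, u i))" for u
  have enc: "inj_on enc A" for A
  proof (rule inj_onI)
    fix u v assume e: "enc u = enc v"
    have "u i = v i" for i
    proof -
      have "p (i, u i) \<in> enc u" unfolding enc_def by blast
      then have "p (i, u i) \<in> range (\<lambda>i. p (i, v i))" using e unfolding enc_def by simp
      then obtain j where "p (i, u i) = p (j, v j)" by blast
      then have "(i, u i) = (j, v j)" using injp unfolding inj_def by blast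
      then show ?thesis by auto
    qed
    then show "u = v" by blast
  qed
  let ?I = "mcarrier M" and ?N = "\<lambda>y. range (\<lambda>r. msmult M r y)"
  have N: "\<And>i. i \<in> ?I \<Longrightarrow> submod M (?N i)" using submod_cyclic[OF M] by blast
  let ?D = "DS M ?I ?N"
  have SS: "gsum M ` mcarrier ?D = mcarrier M"
  proof
    show "gsum M ` mcarrier ?D \<subseteq> mcarrier M" using gsum_closed[of M ?I ?N, OF M N] by (simp add: image_subset_iff)
    show "mcarrier M \<subseteq> gsum M ` mcarrier ?D"
    proof
      fix y assume y: "y \<in> mcarrier M"
      define u where "u = (\<lambda>j. if j = y then y else mzero M)"
      have u: "u \<in> mcarrier ?D"
      proof -
        have "{j. u j \<noteq> mzero M} \<subseteq> {y}" unfolding u_def by auto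
        moreover have "y \<in> ?N y" using lm_one[OF M y] by (metis rangeI)
        moreover have "mzero M \<in> ?N j" if "j \<in> ?I" for j using N[OF that] unfolding submod_def by blast
        ultimately show ?thesis using y unfolding DS_simps u_def by (auto intro: finite_subset)
      qed
      have "gsum M u = finprod (AM M) u {y}" by (rule gsum_eq[OF M N u]) (auto simp: u_def)
      also have "\<dots> = madd M (u y) (finprod (AM M) u {})"
        using comm_monoid.finprod_insert[OF AM_cm[OF M], of "{}" y u] y unfolding u_def by simp
      also have "finprod (AM M) u {} = mzero M"
        using comm_monoid.finprod_empty[OF AM_cm[OF M]] by (metis AM_simps(3))
      also have "madd M (u y) (mzero M) = y" using lm_rzero[OF M y] unfolding u_def by simp
      finally show "y \<in> gsum M ` mcarrier ?D" using u by (metis rangeI image_eqI)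
    qed
  qed
  have f: "mhom M (sub M (gsum M ` mcarrier ?D)) id" unfolding SS mhom_def by simp
  obtain h where h: "mhom M ?D h" "\<forall>m\<in>mcarrier M. gsum M (h m) = id m"
    using Glemma[OF M P N enc f] by blast
  show ?thesis unfolding CORE_def
  proof
    fix x assume x: "x \<in> mcarrier M"
    obtain n b where b: "\<forall>k<n. b k \<in> ?I" "gsum M (h x) = msum M (\<lambda>k. h x (b k)) n"
      using core_from_h[OF M N h(1) x] by blast
    have "\<forall>k<n. b k \<in> mcarrier M \<and> mhom M (cyclic_sub M (b k)) (\<lambda>m. h m (b k))"
      using b(1) mhom_component[OF h(1)] unfolding cyclic_is_sub by blast
    moreover have "x = msum M (\<lambda>k. h x (b k)) n" using b(2) h(2) x by simp
    ultimately show "\<exists>n ys hs. (\<forall>j<n. ys j \<in> mcarrier M \<and> mhom M (cyclic_sub M (ys j)) (hs j)) \<and> x = msum M (\<lambda>j. hs j x) n"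
      by (intro exI[of _ n] exI[of _ b] exI[of _ "\<lambda>k m. h m (b k)"]) blast
  qed
qed


fun spn :: "('r::ring_1, 'm) lmod \<Rightarrow> 'm list \<Rightarrow> 'm set" where
  "spn M [] = {mzero M}"
| "spn M (y # L) = {madd M (msmult M r y) s | r s. s \<in> spn M L}"

lemma spn_submod: assumes M: "lmodule M" shows "set L \<subseteq> mcarrier M \<Longrightarrow> submod M (spn M L)"
proof (induction L)
  case Nil
  then show ?case unfolding submod_def using lm_zero[OF M] lm_lzero[OF M] lm_smult_zero[OF M] by auto
next
  case (Cons y L)
  have y: "y \<in> mcarrier M" using Cons.prems by simp
  have S: "submod M (spn M L)" using Cons by simp
  have SC: "spn M L \<subseteq> mcarrier M" and S0: "mzero M \<in> spn M L"
    and Sa: "\<And>a b. a \<in> spn M L \<Longrightarrow> b \<in> spn M L \<Longrightarrow> madd M a b \<in> spn M L"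
    and Ss: "\<And>r a. a \<in> spn M L \<Longrightarrow> msmult M r a \<in> spn M L" using S unfolding submod_def by blast+
  show ?case unfolding submod_def
  proof (intro conjI ballI allI)
    show "spn M (y # L) \<subseteq> mcarrier M" using SC lm_add[OF M] lm_smult[OF M y] by auto
    have "mzero M = madd M (msmult M 0 y) (mzero M)"
      using lm_zero_smult[OF M y] lm_lzero[OF M lm_zero[OF M]] by simp
    then show "mzero M \<in> spn M (y # L)" using S0 by auto
  next
    fix a b assume "a \<in> spn M (y # L)" "b \<in> spn M (y # L)"
    then obtain r s r' s' where rs: "a = madd M (msmult M r y) s" "s \<in> spn M L"
      "b = madd M (msmult M r' y) s'" "s' \<in> spn M L" by auto
    have "madd M a b = madd M (madd M (msmult M r y) (msmult M r' y)) (madd M s s')"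
      unfolding rs(1,3) using lm_swap[OF M] lm_smult[OF M y] SC rs by blast
    also have "\<dots> = madd M (msmult M (r + r') y) (madd M s s')" using lm_dist2[OF M y] by simp
    finally show "madd M a b \<in> spn M (y # L)" using Sa rs by auto
  next
    fix t a assume "a \<in> spn M (y # L)"
    then obtain r s where rs: "a = madd M (msmult M r y) s" "s \<in> spn M L" by auto
    have "msmult M t a = madd M (msmult M (t * r) y) (msmult M t s)"
      unfolding rs(1) using lm_dist1[OF M] lm_smult[OF M y] SC rs lm_smult_assoc[OF M y] by auto
    then show "msmult M t a \<in> spn M (y # L)" using Ss rs by auto
  qed
qed

lemma spn_mem: assumes M: "lmodule M" shows "set L \<subseteq> mcarrier M \<Longrightarrow> x \<in> set L \<Longrightarrow> x \<in> spn M L"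
proof (induction L)
  case Nil then show ?case by simp
next
  case (Cons y L)
  have y: "y \<in> mcarrier M" using Cons.prems by simp
  have S0: "mzero M \<in> spn M L" using spn_submod[OF M, of L] Cons.prems unfolding submod_def by simp
  show ?case
  proof (cases "x = y")
    case True
    have "x = madd M (msmult M 1 y) (mzero M)" using True lm_one[OF M y] lm_rzero[OF M y] by simp
    then show ?thesis using S0 by auto
  next
    case False
    then have xs: "x \<in> spn M L" using Cons by simp
    have "x \<in> mcarrier M" using Cons.prems False by auto
    then have "x = madd M (msmult M 0 y) x" using lm_zero_smult[OF M y] lm_lzero[OF M] by simp
    then show ?thesis using xs by auto
  qed
qed

lemma fin_ind:
  fixes M :: "('r::ring_1, 'm) lmod" and enc :: "('m \<Rightarrow> 'm) \<Rightarrow> 'm set"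
  assumes M: "lmodule M" and P: "proj_sigma M TYPE('m set)" and i12: "i1 \<noteq> i2"
    and enc: "inj_on enc (mcarrier (DS M {i1, i2} (\<lambda>_. mcarrier M)))"
  shows "set L \<subseteq> mcarrier M \<Longrightarrow> mhom M M f \<Longrightarrow> f ` mcarrier M \<subseteq> spn M L \<Longrightarrow>
    \<exists>n ys hs. (\<forall>j<n. ys j \<in> mcarrier M \<and> mhom M (cyclic_sub M (ys j)) (hs j)) \<and>
       (\<forall>x\<in>mcarrier M. f x = msum M (\<lambda>j. hs j x) n)"
proof (induction L arbitrary: f)
  case Nil
  then have "\<forall>x\<in>mcarrier M. f x = msum M (\<lambda>j. id x) 0" by auto
  then show ?case by (intro exI[of _ 0] exI[of _ "\<lambda>_. mzero M"] exI[of _ "\<lambda>_. id"]) simp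
next
  case (Cons y L)
  have y: "y \<in> mcarrier M" and LC: "set L \<subseteq> mcarrier M" using Cons.prems by auto
  define N where "N = (\<lambda>i. if i = i1 then range (\<lambda>r. msmult M r y) else spn M L)"
  have N: "\<And>i. i \<in> {i1, i2} \<Longrightarrow> submod M (N i)"
    unfolding N_def using submod_cyclic[OF M y] spn_submod[OF M LC] by auto
  let ?D = "DS M {i1, i2} N"
  have g2: "gsum M u = madd M (u i1) (u i2)" if u: "u \<in> mcarrier ?D" for u
  proof -
    have val: "u i \<in> mcarrier M" for i using DS_val[OF M N u] .
    have CM: "comm_monoid (AM M)" using AM_cm[OF M] .
    have "gsum M u = finprod (AM M) u {i1, i2}"
      by (rule gsum_eq[OF M N u]) (use u in \<open>auto simp: DS_simps\<close>)
    also have "\<dots> = madd M (u i1) (finprod (AM M) u {i2})"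
      using comm_monoid.finprod_insert[OF CM, of "{i2}" i1 u] i12 val by (simp add: Pi_def)
    also have "finprod (AM M) u {i2} = madd M (u i2) (finprod (AM M) u {})"
      using comm_monoid.finprod_insert[OF CM, of "{}" i2 u] val by (simp add: Pi_def)
    also have "finprod (AM M) u {} = mzero M"
      using comm_monoid.finprod_empty[OF CM] by (metis AM_simps(3))
    finally show ?thesis using lm_rzero[OF M val] by simp
  qed
  have Ssup: "spn M (y # L) \<subseteq> gsum M ` mcarrier ?D"
  proof
    fix z assume "z \<in> spn M (y # L)"
    then obtain r s where rs: "z = madd M (msmult M r y) s" "s \<in> spn M L" by auto
    define u where "u = (\<lambda>j. if j = i1 then msmult M r y else if j = i2 then s else mzero M)"
    have u: "u \<in> mcarrier ?D"
    proof -
      have "{j. u j \<noteq> mzero M} \<subseteq> {i1, i2}" unfolding u_def by auto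
      then show ?thesis using rs(2) i12 unfolding DS_simps u_def N_def by (auto intro: finite_subset)
    qed
    have "gsum M u = z" using g2[OF u] rs(1) i12 unfolding u_def by simp
    then show "z \<in> gsum M ` mcarrier ?D" using u by blast
  qed
  have fS: "f ` mcarrier M \<subseteq> gsum M ` mcarrier ?D" using Cons.prems(3) Ssup by (rule subset_trans)
  have f: "mhom M (sub M (gsum M ` mcarrier ?D)) f"
    using Cons.prems(2) fS unfolding mhom_def sub_simps image_subset_iff by blast
  obtain h where h: "mhom M ?D h" "\<forall>m\<in>mcarrier M. gsum M (h m) = f m"
    using Glemma[OF M P N enc f] by blast
  have h1: "mhom M (cyclic_sub M y) (\<lambda>m. h m i1)"
    using mhom_component[OF h(1), of i1] unfolding cyclic_is_sub N_def by simp
  have h2s: "mhom M (sub M (spn M L)) (\<lambda>m. h m i2)"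
    using mhom_component[OF h(1), of i2] i12 unfolding N_def by simp
  have spnC: "spn M L \<subseteq> mcarrier M" using spn_submod[OF M LC] unfolding submod_def by blast
  have h2: "mhom M M (\<lambda>m. h m i2)" using h2s spnC unfolding mhom_def by auto
  have h2i: "(\<lambda>m. h m i2) ` mcarrier M \<subseteq> spn M L" using h2s unfolding mhom_def by auto
  obtain n ys hs where IH: "\<forall>j<n. ys j \<in> mcarrier M \<and> mhom M (cyclic_sub M (ys j)) (hs j)"
    "\<forall>x\<in>mcarrier M. h x i2 = msum M (\<lambda>j. hs j x) n"
    using Cons.IH[OF LC h2 h2i] by blast
  have "\<forall>j<Suc n. (ys(n := y)) j \<in> mcarrier M \<and> mhom M (cyclic_sub M ((ys(n := y)) j)) ((hs(n := (\<lambda>m. h m i1))) j)"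
    using IH(1) h1 y by (auto simp: less_Suc_eq)
  moreover have "\<forall>x\<in>mcarrier M. f x = msum M (\<lambda>j. (hs(n := (\<lambda>m. h m i1))) j x) (Suc n)"
  proof
    fix x assume x: "x \<in> mcarrier M"
    have hx: "h x \<in> mcarrier ?D" using h(1) x unfolding mhom_def by blast
    have v: "h x i1 \<in> mcarrier M" "h x i2 \<in> mcarrier M" using DS_val[OF M N hx] by auto
    have "msum M (\<lambda>j. (hs(n := (\<lambda>m. h m i1))) j x) n = msum M (\<lambda>j. hs j x) n"
      by (rule msum_cong) simp
    then have "msum M (\<lambda>j. (hs(n := (\<lambda>m. h m i1))) j x) (Suc n) = madd M (h x i2) (h x i1)"
      using IH(2) x by simp
    also have "\<dots> = gsum M (h x)" using g2[OF hx] lm_comm[OF M v(2) v(1)] by simp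
    also have "\<dots> = f x" using h(2) x by simp
    finally show "f x = msum M (\<lambda>j. (hs(n := (\<lambda>m. h m i1))) j x) (Suc n)" by simp
  qed
  ultimately show ?case by blast
qed


lemma sq_le_pow2: "4 \<le> (k::nat) \<Longrightarrow> k * k \<le> 2 ^ k"
proof (induction k rule: nat_induct_at_least)
  case base then show ?case by simp
next
  case (Suc k)
  have "4 * k \<le> k * k" using Suc.hyps by (rule mult_le_mono1)
  then have "2 * k + 1 \<le> k * k" using Suc.hyps by linarith
  then have "Suc k * Suc k \<le> 2 ^ k + 2 ^ k" using Suc.IH by simp
  then show ?case by simp
qed

lemma noncyclic_four:
  fixes M :: "('r::ring_1, 'm) lmod"
  assumes M: "lmodule M" and nc: "\<not> (\<exists>y\<in>mcarrier M. mcarrier M \<subseteq> range (\<lambda>r. msmult M r y))"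
  shows "\<exists>z w. z \<in> mcarrier M \<and> w \<in> mcarrier M \<and> z \<noteq> w \<and> 4 \<le> card (mcarrier M) \<or> infinite (mcarrier M)"
proof (cases "finite (mcarrier M)")
  case False then show ?thesis by blast
next
  case fin: True
  obtain z where z: "z \<in> mcarrier M" "z \<notin> range (\<lambda>r. msmult M r (mzero M))"
    using nc lm_zero[OF M] by blast
  have z0: "z \<noteq> mzero M" using z(2) lm_smult_zero[OF M] by (metis rangeI)
  obtain w where w: "w \<in> mcarrier M" "w \<notin> range (\<lambda>r. msmult M r z)" using nc z(1) by blast
  have w0: "w \<noteq> mzero M" using w(2) lm_zero_smult[OF M z(1)] by (metis rangeI)
  have wz: "w \<noteq> z" using w(2) lm_one[OF M z(1)] by (metis rangeI)
  let ?v = "madd M z w"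
  have vc: "?v \<in> mcarrier M" using lm_add[OF M z(1) w(1)] .
  have v0: "?v \<noteq> mzero M"
  proof
    assume "?v = mzero M"
    then have "w = msmult M (-1) z" using lm_neg_unique[OF M z(1) w(1)] by simp
    then show False using w(2) by (metis rangeI)
  qed
  have vz: "?v \<noteq> z"
  proof
    assume "?v = z"
    then have "madd M z w = madd M z (mzero M)" using lm_rzero[OF M z(1)] by simp
    then show False using lm_cancel[OF M z(1) w(1) lm_zero[OF M]] w0 by simp
  qed
  have vw: "?v \<noteq> w"
  proof
    assume "?v = w"
    then have "madd M w z = madd M w (mzero M)" using lm_rzero[OF M w(1)] lm_comm[OF M z(1) w(1)] by simp
    then show False using lm_cancel[OF M w(1) z(1) lm_zero[OF M]] z0 by simp
  qed
  have "card {mzero M, z, w, ?v} = 4" using z0 w0 wz v0 vz vw by auto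
  moreover have "{mzero M, z, w, ?v} \<subseteq> mcarrier M" using lm_zero[OF M] z(1) w(1) vc by auto
  ultimately have "4 \<le> card (mcarrier M)" using card_mono[OF fin] by metis
  then show ?thesis using z(1) w(1) wz by blast
qed

lemma core_finite:
  fixes M :: "('r::ring_1, 'm) lmod"
  assumes M: "lmodule M" and P: "proj_sigma M TYPE('m set)" and fin: "finite (UNIV :: 'm set)"
  shows "CORE M"
proof (cases "\<exists>y\<in>mcarrier M. mcarrier M \<subseteq> range (\<lambda>r. msmult M r y)")
  case True
  then obtain y0 where y0: "y0 \<in> mcarrier M" "mcarrier M \<subseteq> range (\<lambda>r. msmult M r y0)" by blast
  have hid: "mhom M (cyclic_sub M y0) id" using y0(2) unfolding mhom_def cyclic_sub_def by auto
  show ?thesis unfolding CORE_def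
  proof
    fix x assume x: "x \<in> mcarrier M"
    have "x = msum M (\<lambda>j. id x) 1" using lm_lzero[OF M x] by simp
    then show "\<exists>n ys hs. (\<forall>j<n. ys j \<in> mcarrier M \<and> mhom M (cyclic_sub M (ys j)) (hs j)) \<and> x = msum M (\<lambda>j. hs j x) n"
      using y0(1) hid by (intro exI[of _ 1] exI[of _ "\<lambda>_. y0"] exI[of _ "\<lambda>_. id"]) auto
  qed
next
  case False
  have finC: "finite (mcarrier M)" using fin by (rule finite_subset[rotated]) simp
  obtain z w where zw: "z \<in> mcarrier M" "w \<in> mcarrier M" "z \<noteq> w" "4 \<le> card (mcarrier M)"
    using noncyclic_four[OF M False] finC by blast
  let ?G = "DS M {z, w} (\<lambda>_. mcarrier M)"
  define \<phi> where "\<phi> u = (u z, u w)" for u :: "'m \<Rightarrow> 'm"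
  have inj\<phi>: "inj_on \<phi> (mcarrier ?G)"
  proof (rule inj_onI)
    fix u v assume u: "u \<in> mcarrier ?G" and v: "v \<in> mcarrier ?G" and e: "\<phi> u = \<phi> v"
    show "u = v"
    proof
      fix i show "u i = v i" using u v e unfolding \<phi>_def DS_simps by (cases "i = z \<or> i = w") auto
    qed
  qed
  have \<phi>im: "\<phi> ` mcarrier ?G \<subseteq> mcarrier M \<times> mcarrier M" unfolding \<phi>_def DS_simps by auto
  have finG: "finite (mcarrier ?G)" using inj_on_finite[OF inj\<phi> \<phi>im] finC by simp
  have cG: "card (mcarrier ?G) \<le> card (mcarrier M) * card (mcarrier M)"
    using card_inj_on_le[OF inj\<phi> \<phi>im] finC by (simp add: card_cartesian_product)
  have kM: "card (mcarrier M) \<le> card (UNIV :: 'm set)" using card_mono[OF fin] by simp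
  have "card (mcarrier M) * card (mcarrier M) \<le> card (UNIV :: 'm set) * card (UNIV :: 'm set)"
    using kM by (simp add: mult_le_mono)
  also have "\<dots> \<le> 2 ^ card (UNIV :: 'm set)" using sq_le_pow2 kM zw(4) by simp
  also have "\<dots> = card (UNIV :: 'm set set)" using card_Pow[OF fin] by (simp add: Pow_UNIV)
  finally have "card (mcarrier ?G) \<le> card (UNIV :: 'm set set)" using cG by linarith
  moreover have "finite (UNIV :: 'm set set)"
  proof -
    have "finite (Pow (UNIV :: 'm set))" using fin by (simp only: finite_Pow_iff)
    then show ?thesis by (simp only: Pow_UNIV)
  qed
  ultimately obtain enc :: "('m \<Rightarrow> 'm) \<Rightarrow> 'm set" where enc: "inj_on enc (mcarrier ?G)"
    using card_le_inj[OF finG] by blast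
  obtain L where L: "set L = mcarrier M" using finite_list[OF finC] by blast
  have hid: "mhom M M id" unfolding mhom_def by simp
  have sp: "id ` mcarrier M \<subseteq> spn M L" using spn_mem[OF M, of L] L by auto
  obtain n ys hs where R: "\<forall>j<n. ys j \<in> mcarrier M \<and> mhom M (cyclic_sub M (ys j)) (hs j)"
    "\<forall>x\<in>mcarrier M. id x = msum M (\<lambda>j. hs j x) n"
    using fin_ind[OF M P zw(3) enc _ hid sp] L by auto
  show ?thesis unfolding CORE_def using R by (intro ballI exI[of _ n] exI[of _ ys] exI[of _ hs]) auto
qed

theorem corollary3p7:
  fixes M :: "('r::ring_1, 'm) lmod"
  assumes "lmodule M"
    and "proj_sigma M TYPE('m set)"
  shows "Nil_star M = mprod M (Nil_star M) M \<and> Nil_star M = MNil_star M M"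
proof
  show "Nil_star M = mprod M (Nil_star M) M" using claim1[OF assms] .
  have C: "CORE M"
  proof (cases "finite (UNIV :: 'm set)")
    case True then show ?thesis using core_finite[OF assms] by blast
  next
    case False then show ?thesis using core_infinite[OF assms] by blast
  qed
  show "Nil_star M = MNil_star M M"
    using Nil_to_MNil[OF assms(1) C] MNil_to_Nil[OF assms(1)] by blast
qed


end
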